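(* A ranked poset is (isomorphic to) a nice section if and only if it is a two-element antichain or a 6-stack. Consequently, a ranked poset is (isomorphic to) a tower of nice sections if and only if it is a 6-tower.
   Context: All posets are finite. For a poset $P$ and $p\in P$, the rank $r(p)$ of $p$ is the largest $m$ such that there is a chain $p_0<\dots<p_m=p$ in $P$. $P$ is ranked of rank $r(P)$ if every maximal chain has exactly $r(P)+1$ elements. For $0\le i\le j$, $P(i,j)=\{p\in P:i\le r(p)\le j\}$, $P(i)=P(i,i)$ (induced order). The ordinal sum of posets $P_1,\dots,P_k$ ($k\ge1$) is their disjoint union ordered by the orders of the $P_i$ together with $p<q$ whenever $p\in P_i,q\in P_j,i<j$. The 6-crown $C_6$ is the poset on $\{x_0,x_1,x_2,y_0,y_1,y_2\}$ whose only strict comparabilities are $x_0<y_0>x_1<y_1>x_2<y_2>x_0$. A 6-stack is a ranked poset $P$ of rank $n\ge1$ such that $P(i,i+1)\cong C_6$ for each $0\le i<n$. A 6-tower is an ordinal sum of one or more posets each of which is a two-element antichain or a 6-stack. A section is either a two-element antichain or a poset on the set $\{[i,k]: 0\le i\le 2,\ 0\le k\le n\}$ (with $3(n+1)$ distinct elements), for some $n\ge 1$, such that: (1) $[i,k]<[i,l]$ whenever $0\le i\le 2$ and $0\le k<l\le n$; (2) for each $k$, $\{[0,k],[1,k],[2,k]\}$ is an antichain; (3) for all $i,j,k,l$, $[i,k]<[j,l]$ implies $[i+1,k]<[j+1,l]$ (first indices mod $3$); (4) for each $0\le k<n$ there are $i,j\in\{0,1,2\}$ with $[i,k]\not<[j,k+1]$.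 A section $P$ is nice if for all $p<q$ in $P$ there exist $r,s\in P$ with $p<r$, $q\not<r$, and $s<q$, $s\not<p$. A tower of (nice) sections is an ordinal sum of one or more (nice) sections. *)

theory Defs
  imports Main
begin

definition is_poset :: "'a set \<Rightarrow> ('a \<Rightarrow> 'a \<Rightarrow> bool) \<Rightarrow> bool" where
  "is_poset A lt \<longleftrightarrow> finite A \<and> (\<forall>x\<in>A. \<not> lt x x) \<and>
     (\<forall>x\<in>A. \<forall>y\<in>A. \<forall>z\<in>A. lt x y \<longrightarrow> lt y z \<longrightarrow> lt x z)"

definition poset_iso :: "'a set \<Rightarrow> ('a \<Rightarrow> 'a \<Rightarrow> bool) \<Rightarrow> 'b set \<Rightarrow> ('b \<Rightarrow> 'b \<Rightarrow> bool) \<Rightarrow> bool" where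
  "poset_iso A lt B lt' \<longleftrightarrow> (\<exists>f. bij_betw f A B \<and> (\<forall>x\<in>A. \<forall>y\<in>A. lt x y \<longleftrightarrow> lt' (f x) (f y)))"

definition prank :: "'a set \<Rightarrow> ('a \<Rightarrow> 'a \<Rightarrow> bool) \<Rightarrow> 'a \<Rightarrow> nat" where
  "prank A lt p = (GREATEST m. \<exists>f. f m = p \<and> (\<forall>i\<le>m. f i \<in> A) \<and> (\<forall>i<m. lt (f i) (f (Suc i))))"

definition is_chain :: "'a set \<Rightarrow> ('a \<Rightarrow> 'a \<Rightarrow> bool) \<Rightarrow> 'a set \<Rightarrow> bool" where
  "is_chain A lt C \<longleftrightarrow> C \<subseteq> A \<and> (\<forall>x\<in>C. \<forall>y\<in>C. x = y \<or> lt x y \<or> lt y x)"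

definition is_maxchain :: "'a set \<Rightarrow> ('a \<Rightarrow> 'a \<Rightarrow> bool) \<Rightarrow> 'a set \<Rightarrow> bool" where
  "is_maxchain A lt C \<longleftrightarrow> is_chain A lt C \<and> (\<forall>D. is_chain A lt D \<and> C \<subseteq> D \<longrightarrow> D = C)"

definition ranked_of :: "'a set \<Rightarrow> ('a \<Rightarrow> 'a \<Rightarrow> bool) \<Rightarrow> nat \<Rightarrow> bool" where
  "ranked_of A lt n \<longleftrightarrow> (\<forall>C. is_maxchain A lt C \<longrightarrow> card C = n + 1)"

definition ranked :: "'a set \<Rightarrow> ('a \<Rightarrow> 'a \<Rightarrow> bool) \<Rightarrow> bool" where
  "ranked A lt \<longleftrightarrow> (\<exists>n. ranked_of A lt n)"

text \<open>P(i,j) (carrier; the order is the restriction of lt)\<close>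
definition rank_slice :: "'a set \<Rightarrow> ('a \<Rightarrow> 'a \<Rightarrow> bool) \<Rightarrow> nat \<Rightarrow> nat \<Rightarrow> 'a set" where
  "rank_slice A lt i j = {p\<in>A. i \<le> prank A lt p \<and> prank A lt p \<le> j}"

text \<open>The 6-crown: x_i = i, y_i = 3 + i\<close>
definition crown6_carrier :: "nat set" where
  "crown6_carrier = {0,1,2,3,4,5}"

definition crown6_lt :: "nat \<Rightarrow> nat \<Rightarrow> bool" where
  "crown6_lt a b \<longleftrightarrow> (a, b) \<in> {(0,3),(1,3),(1,4),(2,4),(2,5),(0,5)}"

definition two_antichain :: "'a set \<Rightarrow> ('a \<Rightarrow> 'a \<Rightarrow> bool) \<Rightarrow> bool" where
  "two_antichain A lt \<longleftrightarrow> card A = 2 \<and> (\<forall>x\<in>A. \<forall>y\<in>A. \<not> lt x y)"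

definition six_stack :: "'a set \<Rightarrow> ('a \<Rightarrow> 'a \<Rightarrow> bool) \<Rightarrow> bool" where
  "six_stack A lt \<longleftrightarrow> (\<exists>n\<ge>1. ranked_of A lt n \<and>
     (\<forall>i<n. poset_iso (rank_slice A lt i (Suc i)) lt crown6_carrier crown6_lt))"

definition osum_carrier :: "('b set \<times> ('b \<Rightarrow> 'b \<Rightarrow> bool)) list \<Rightarrow> (nat \<times> 'b) set" where
  "osum_carrier Ps = {(j, x). j < length Ps \<and> x \<in> fst (Ps ! j)}"

definition osum_lt :: "('b set \<times> ('b \<Rightarrow> 'b \<Rightarrow> bool)) list \<Rightarrow> nat \<times> 'b \<Rightarrow> nat \<times> 'b \<Rightarrow> bool" where
  "osum_lt Ps p q \<longleftrightarrow> fst p < fst q \<or> (fst p = fst q \<and> snd (Ps ! fst p) (snd p) (snd q))"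

definition six_tower :: "'a set \<Rightarrow> ('a \<Rightarrow> 'a \<Rightarrow> bool) \<Rightarrow> bool" where
  "six_tower A lt \<longleftrightarrow> (\<exists>Ps :: ('a set \<times> ('a \<Rightarrow> 'a \<Rightarrow> bool)) list. Ps \<noteq> [] \<and>
     (\<forall>P\<in>set Ps. is_poset (fst P) (snd P) \<and>
        (two_antichain (fst P) (snd P) \<or> six_stack (fst P) (snd P))) \<and>
     poset_iso A lt (osum_carrier Ps) (osum_lt Ps))"

text \<open>Sections; [i,k] is represented by the pair (i,k)\<close>
definition is_section :: "(nat \<times> nat) set \<Rightarrow> (nat \<times> nat \<Rightarrow> nat \<times> nat \<Rightarrow> bool) \<Rightarrow> bool" where
  "is_section A lt \<longleftrightarrow> is_poset A lt \<and>
    (two_antichain A lt \<or>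
     (\<exists>n\<ge>1. A = {0..2} \<times> {0..n} \<and>
        (\<forall>i\<le>2. \<forall>k l. k < l \<and> l \<le> n \<longrightarrow> lt (i,k) (i,l)) \<and>
        (\<forall>k\<le>n. \<forall>i\<le>2. \<forall>j\<le>2. \<not> lt (i,k) (j,k)) \<and>
        (\<forall>i\<le>2. \<forall>j\<le>2. \<forall>k\<le>n. \<forall>l\<le>n. lt (i,k) (j,l) \<longrightarrow>
            lt ((i+1) mod 3, k) ((j+1) mod 3, l)) \<and>
        (\<forall>k<n. \<exists>i\<le>2. \<exists>j\<le>2. \<not> lt (i,k) (j, Suc k))))"

definition is_nice :: "'a set \<Rightarrow> ('a \<Rightarrow> 'a \<Rightarrow> bool) \<Rightarrow> bool" where
  "is_nice A lt \<longleftrightarrow> (\<forall>p\<in>A. \<forall>q\<in>A. lt p q \<longrightarrow>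
     (\<exists>r\<in>A. lt p r \<and> \<not> (q = r \<or> lt q r)) \<and> (\<exists>s\<in>A. lt s q \<and> \<not> (s = p \<or> lt s p)))"

definition nice_section :: "(nat \<times> nat) set \<Rightarrow> (nat \<times> nat \<Rightarrow> nat \<times> nat \<Rightarrow> bool) \<Rightarrow> bool" where
  "nice_section A lt \<longleftrightarrow> is_section A lt \<and> is_nice A lt"

end

theory Submission
  imports Defs
begin


definition chain_to :: "'a set \<Rightarrow> ('a \<Rightarrow> 'a \<Rightarrow> bool) \<Rightarrow> nat \<Rightarrow> 'a \<Rightarrow> bool" where
  "chain_to A lt m p \<longleftrightarrow> (\<exists>f. f m = p \<and> (\<forall>i\<le>m. f i \<in> A) \<and> (\<forall>i<m. lt (f i) (f (Suc i))))"

lemma prank_alt: "prank A lt p = (GREATEST m. chain_to A lt m p)"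
  unfolding prank_def chain_to_def by simp

lemma chain_lt_trans:
  assumes P: "is_poset A lt" and A: "\<forall>i\<le>m. f i \<in> A" and L: "\<forall>i<m. lt (f i) (f (Suc i))"
  shows "i < j \<Longrightarrow> j \<le> m \<Longrightarrow> lt (f i) (f j)"
proof (induction j)
  case 0 then show ?case by simp
next
  case (Suc j)
  show ?case
  proof (cases "i = j")
    case True then show ?thesis using Suc L by simp
  next
    case False
    then have "lt (f i) (f j)" using Suc by simp
    moreover have "lt (f j) (f (Suc j))" using L Suc by simp
    ultimately show ?thesis using P A Suc unfolding is_poset_def
      by (meson Suc_leD less_imp_le_nat order.trans)
  qed
qed

lemma chain_to_bound:
  assumes P: "is_poset A lt" and C: "chain_to A lt m p"
  shows "m < card A"
proof -
  obtain f where f: "f m = p" "\<forall>i\<le>m. f i \<in> A" "\<forall>i<m. lt (f i) (f (Suc i))"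
    using C unfolding chain_to_def by blast
  have irr: "\<forall>x\<in>A. \<not> lt x x" and fin: "finite A" using P unfolding is_poset_def by auto
  have "inj_on f {0..m}"
  proof (rule inj_onI)
    fix i j assume ij: "i \<in> {0..m}" "j \<in> {0..m}" "f i = f j"
    show "i = j"
    proof (rule ccontr)
      assume "i \<noteq> j"
      then have "i < j \<or> j < i" by arith
      then show False
        using chain_lt_trans[OF P f(2) f(3)] ij irr f(2) by (metis atLeastAtMost_iff)
    qed
  qed
  moreover have "f ` {0..m} \<subseteq> A" using f(2) by auto
  ultimately have "card {0..m} \<le> card A" using fin by (metis card_image card_mono)
  then show ?thesis by simp
qed

lemma chain_to_0: "p \<in> A \<Longrightarrow> chain_to A lt 0 p"
  unfolding chain_to_def by (rule exI[of _ "\<lambda>_. p"]) simp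

lemma prank_ex:
  assumes P: "is_poset A lt" and p: "p \<in> A"
  shows "chain_to A lt (prank A lt p) p"
  unfolding prank_alt
  by (rule GreatestI_nat[of _ 0 "card A"]) (use chain_to_0[OF p] chain_to_bound[OF P] in \<open>auto simp: less_imp_le\<close>)

lemma prank_ge:
  assumes P: "is_poset A lt" and C: "chain_to A lt m p"
  shows "m \<le> prank A lt p"
  unfolding prank_alt
  by (rule Greatest_le_nat[of _ _ "card A"]) (use C chain_to_bound[OF P] in \<open>auto simp: less_imp_le\<close>)

lemma chain_to_ext:
  assumes C: "chain_to A lt m p" and q: "q \<in> A" and l: "lt p q"
  shows "chain_to A lt (Suc m) q"
proof -
  obtain f where f: "f m = p" "\<forall>i\<le>m. f i \<in> A" "\<forall>i<m. lt (f i) (f (Suc i))"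
    using C unfolding chain_to_def by blast
  define g where "g i = (if i \<le> m then f i else q)" for i
  have "g (Suc m) = q" "\<forall>i\<le>Suc m. g i \<in> A" "\<forall>i<Suc m. lt (g i) (g (Suc i))"
    using f q l by (auto simp: g_def le_Suc_eq less_Suc_eq)
  then show ?thesis unfolding chain_to_def by blast
qed

lemma prank_less:
  assumes P: "is_poset A lt" and p: "p \<in> A" and q: "q \<in> A" and l: "lt p q"
  shows "prank A lt p < prank A lt q"
  using prank_ge[OF P chain_to_ext[OF prank_ex[OF P p] q l]] by simp

lemma prank_pred:
  assumes P: "is_poset A lt" and p: "p \<in> A" and r: "prank A lt p = Suc k"
  shows "\<exists>q\<in>A. lt q p \<and> prank A lt q = k"
proof -
  obtain f where f: "f (Suc k) = p" "\<forall>i\<le>Suc k. f i \<in> A" "\<forall>i<Suc k. lt (f i) (f (Suc i))"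
    using prank_ex[OF P p] r unfolding chain_to_def by auto
  have c: "chain_to A lt k (f k)" unfolding chain_to_def
    by (rule exI[of _ f]) (use f in auto)
  have fk: "f k \<in> A" using f by auto
  have "lt (f k) p" using f by auto
  moreover have "k \<le> prank A lt (f k)" using prank_ge[OF P c] .
  moreover have "prank A lt (f k) < Suc k" using prank_less[OF P fk p] \<open>lt (f k) p\<close> r by simp
  ultimately show ?thesis using fk by (intro bexI[of _ "f k"]) auto
qed

lemma maxchain_ext:
  assumes fin: "finite A" and C: "is_chain A lt C"
  shows "\<exists>M. is_maxchain A lt M \<and> C \<subseteq> M"
proof -
  define S where "S = {D. is_chain A lt D \<and> C \<subseteq> D}"
  have "S \<subseteq> Pow A" unfolding S_def is_chain_def by auto
  then have finS: "finite S" using fin by (meson finite_Pow_iff finite_subset)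
  have "C \<in> S" using C unfolding S_def by auto
  have "Max (card ` S) \<in> card ` S" using finS \<open>C \<in> S\<close> by (intro Max_in) auto
  then obtain M where M1: "M \<in> S" "card M = Max (card ` S)" by auto
  have M: "M \<in> S" "\<forall>D\<in>S. card D \<le> card M"
    using M1 finS by auto
  have MA: "M \<subseteq> A" using M unfolding S_def is_chain_def by auto
  have "is_maxchain A lt M"
    unfolding is_maxchain_def
  proof (intro conjI allI impI)
    show "is_chain A lt M" using M unfolding S_def by auto
    fix D assume D: "is_chain A lt D \<and> M \<subseteq> D"
    then have "D \<in> S" using M unfolding S_def by auto
    then have "card D \<le> card M" using M by auto
    moreover have "finite D" using D fin unfolding is_chain_def by (meson finite_subset)
    ultimately show "D = M" using D by (metis card_seteq)
  qed
  then show ?thesis using M unfolding S_def by auto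
qed


lemma chain_image:
  assumes P: "is_poset A lt" and f: "\<forall>i\<le>m. f i \<in> A" "\<forall>i<m. lt (f i) (f (Suc i))"
  shows "is_chain A lt (f ` {0..m}) \<and> card (f ` {0..m}) = Suc m"
proof -
  have irr: "\<forall>x\<in>A. \<not> lt x x" using P unfolding is_poset_def by auto
  have inj: "inj_on f {0..m}"
  proof (rule inj_onI)
    fix i j assume ij: "i \<in> {0..m}" "j \<in> {0..m}" "f i = f j"
    show "i = j"
    proof (rule ccontr)
      assume "i \<noteq> j"
      then have "i < j \<or> j < i" by arith
      then show False
        using chain_lt_trans[OF P f(1) f(2)] ij irr f(1) by (metis atLeastAtMost_iff)
    qed
  qed
  have "is_chain A lt (f ` {0..m})"
    unfolding is_chain_def
  proof (intro conjI ballI)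
    show "f ` {0..m} \<subseteq> A" using f by auto
    fix x y assume "x \<in> f ` {0..m}" "y \<in> f ` {0..m}"
    then obtain i j where "i \<le> m" "j \<le> m" "x = f i" "y = f j" by auto
    then show "x = y \<or> lt x y \<or> lt y x"
      using chain_lt_trans[OF P f(1) f(2), of i j] chain_lt_trans[OF P f(1) f(2), of j i]
      by (metis linorder_neqE_nat)
  qed
  then show ?thesis using inj by (simp add: card_image)
qed

lemma rank_le_n:
  assumes P: "is_poset A lt" and R: "ranked_of A lt n" and p: "p \<in> A"
  shows "prank A lt p \<le> n"
proof -
  obtain f where f: "f (prank A lt p) = p" "\<forall>i\<le>prank A lt p. f i \<in> A"
     "\<forall>i<prank A lt p. lt (f i) (f (Suc i))"
    using prank_ex[OF P p] unfolding chain_to_def by blast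
  note c = chain_image[OF P f(2) f(3)]
  have fin: "finite A" using P unfolding is_poset_def by auto
  obtain M where M: "is_maxchain A lt M" "f ` {0..prank A lt p} \<subseteq> M"
    using maxchain_ext[OF fin] c by blast
  have "card M = n + 1" using R M unfolding ranked_of_def by auto
  moreover have "finite M" using M fin unfolding is_maxchain_def is_chain_def by (meson finite_subset)
  ultimately show ?thesis using card_mono[OF _ M(2)] c by simp
qed

lemma chain_rank_inj:
  assumes P: "is_poset A lt" and C: "is_chain A lt C"
  shows "inj_on (prank A lt) C"
proof (rule inj_onI)
  fix x y assume xy: "x \<in> C" "y \<in> C" "prank A lt x = prank A lt y"
  have "x \<in> A" "y \<in> A" using xy C unfolding is_chain_def by auto
  then show "x = y" using xy C prank_less[OF P] unfolding is_chain_def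
    by (metis less_irrefl)
qed

lemma maxchain_ranks:
  assumes P: "is_poset A lt" and R: "ranked_of A lt n" and M: "is_maxchain A lt M"
  shows "prank A lt ` M = {0..n}"
proof -
  have C: "is_chain A lt M" using M unfolding is_maxchain_def by auto
  have MA: "M \<subseteq> A" using C unfolding is_chain_def by auto
  have "card M = n + 1" using R M unfolding ranked_of_def by auto
  then have "card (prank A lt ` M) = n + 1" using chain_rank_inj[OF P C] by (simp add: card_image)
  moreover have "prank A lt ` M \<subseteq> {0..n}" using rank_le_n[OF P R] MA by auto
  ultimately show ?thesis by (intro card_seteq) auto
qed

section \<open>Isomorphisms\<close>

definition iso_pair where
  "iso_pair A lt B lt' f g \<longleftrightarrow> (\<forall>x\<in>A. f x \<in> B \<and> g (f x) = x) \<and> (\<forall>y\<in>B. g y \<in> A \<and> f (g y) = y)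
     \<and> (\<forall>x\<in>A. \<forall>y\<in>A. lt x y \<longleftrightarrow> lt' (f x) (f y))"

lemma iso_pair_sym: "iso_pair A lt B lt' f g \<Longrightarrow> iso_pair B lt' A lt g f"
  unfolding iso_pair_def by metis

lemma poset_iso_pair: "poset_iso A lt B lt' \<Longrightarrow> \<exists>f g. iso_pair A lt B lt' f g"
proof -
  assume "poset_iso A lt B lt'"
  then obtain f where f: "bij_betw f A B" "\<forall>x\<in>A. \<forall>y\<in>A. lt x y \<longleftrightarrow> lt' (f x) (f y)"
    unfolding poset_iso_def by blast
  have "iso_pair A lt B lt' f (the_inv_into A f)"
    unfolding iso_pair_def using f
    by (auto simp: bij_betw_def the_inv_into_f_f the_inv_into_into[of f A] f_the_inv_into_f
        intro: the_inv_into_into)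
  then show ?thesis by blast
qed

lemma iso_pair_poset: "iso_pair A lt B lt' f g \<Longrightarrow> poset_iso A lt B lt'"
proof -
  assume I: "iso_pair A lt B lt' f g"
  have "inj_on f A" by (rule inj_on_inverseI[of _ g]) (use I in \<open>auto simp: iso_pair_def\<close>)
  moreover have "f ` A = B"
  proof
    show "f ` A \<subseteq> B" using I by (auto simp: iso_pair_def)
    show "B \<subseteq> f ` A"
    proof
      fix y assume "y \<in> B"
      then have "g y \<in> A" "y = f (g y)" using I by (auto simp: iso_pair_def)
      then show "y \<in> f ` A" by blast
    qed
  qed
  ultimately show ?thesis using I unfolding poset_iso_def iso_pair_def bij_betw_def by blast
qed

lemma poset_iso_sym: "poset_iso A lt B lt' \<Longrightarrow> poset_iso B lt' A lt"
  by (meson iso_pair_poset iso_pair_sym poset_iso_pair)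

lemma poset_iso_trans: "poset_iso A lt B lt' \<Longrightarrow> poset_iso B lt' C lt'' \<Longrightarrow> poset_iso A lt C lt''"
proof -
  assume "poset_iso A lt B lt'" "poset_iso B lt' C lt''"
  then obtain f g f' g' where "iso_pair A lt B lt' f g" "iso_pair B lt' C lt'' f' g'"
    using poset_iso_pair by metis
  then have "iso_pair A lt C lt'' (f' \<circ> f) (g \<circ> g')" unfolding iso_pair_def by auto
  then show ?thesis by (rule iso_pair_poset)
qed

lemma poset_iso_sub:
  assumes "iso_pair A lt B lt' f g" "S \<subseteq> A"
  shows "iso_pair S lt (f ` S) lt' f g"
proof -
  have "\<forall>x\<in>S. x \<in> A" using assms(2) by auto
  then show ?thesis using assms(1) unfolding iso_pair_def by auto
qed

lemma chain_to_iso: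
  assumes I: "iso_pair A lt B lt' f g" and C: "chain_to A lt m p"
  shows "chain_to B lt' m (f p)"
proof -
  obtain h where h: "h m = p" "\<forall>i\<le>m. h i \<in> A" "\<forall>i<m. lt (h i) (h (Suc i))"
    using C unfolding chain_to_def by blast
  have "(f \<circ> h) m = f p" "\<forall>i\<le>m. (f \<circ> h) i \<in> B" "\<forall>i<m. lt' ((f \<circ> h) i) ((f \<circ> h) (Suc i))"
    using h I unfolding iso_pair_def by auto
  then show ?thesis unfolding chain_to_def by blast
qed

lemma prank_iso:
  assumes I: "iso_pair A lt B lt' f g" and p: "p \<in> A"
  shows "prank B lt' (f p) = prank A lt p"
proof -
  have "chain_to B lt' m (f p) \<longleftrightarrow> chain_to A lt m p" for m
    using chain_to_iso[OF I, of m p] chain_to_iso[OF iso_pair_sym[OF I], of m "f p"] I p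
    unfolding iso_pair_def by auto
  then show ?thesis unfolding prank_alt by simp
qed

lemma maxchain_iso:
  assumes I: "iso_pair A lt B lt' f g" and M: "is_maxchain A lt M"
  shows "is_maxchain B lt' (f ` M)"
proof -
  have MA: "M \<subseteq> A" and MC: "\<forall>x\<in>M. \<forall>y\<in>M. x = y \<or> lt x y \<or> lt y x"
    using M unfolding is_maxchain_def is_chain_def by auto
  have MA': "\<forall>x\<in>M. x \<in> A" using MA by auto
  have c1: "is_chain B lt' (f ` M)" unfolding is_chain_def
  proof (intro conjI ballI)
    show "f ` M \<subseteq> B" using MA' I unfolding iso_pair_def by auto
    fix x y assume "x \<in> f ` M" "y \<in> f ` M"
    then obtain a b where ab: "a \<in> M" "b \<in> M" "x = f a" "y = f b" by auto
    then show "x = y \<or> lt' x y \<or> lt' y x" using MC MA' I unfolding iso_pair_def by metis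
  qed
  show ?thesis unfolding is_maxchain_def
  proof (intro conjI allI impI c1)
    fix D assume D: "is_chain B lt' D \<and> f ` M \<subseteq> D"
    have DB: "D \<subseteq> B" using D unfolding is_chain_def by auto
    have DB': "\<forall>y\<in>D. y \<in> B" using DB by auto
    have DC: "\<forall>x\<in>D. \<forall>y\<in>D. x = y \<or> lt' x y \<or> lt' y x" using D unfolding is_chain_def by auto
    have "is_chain A lt (g ` D)" unfolding is_chain_def
    proof (intro conjI ballI)
      show "g ` D \<subseteq> A" using DB' I unfolding iso_pair_def by auto
      fix x y assume "x \<in> g ` D" "y \<in> g ` D"
      then obtain a b where ab: "a \<in> D" "b \<in> D" "x = g a" "y = g b" by auto
      then show "x = y \<or> lt x y \<or> lt y x" using DC DB' I unfolding iso_pair_def by metis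
    qed
    moreover have "M \<subseteq> g ` D"
    proof
      fix x assume "x \<in> M"
      then have "f x \<in> D" "g (f x) = x" using D MA' I unfolding iso_pair_def by auto
      then show "x \<in> g ` D" by (metis image_eqI)
    qed
    ultimately have gD: "g ` D = M" using M unfolding is_maxchain_def by auto
    show "D = f ` M"
    proof
      show "f ` M \<subseteq> D" using D by auto
      show "D \<subseteq> f ` M"
      proof
        fix y assume "y \<in> D"
        then have "g y \<in> M" "f (g y) = y" using gD DB' I unfolding iso_pair_def by auto
        then show "y \<in> f ` M" by (metis image_eqI)
      qed
    qed
  qed
qed

lemma ranked_of_iso:
  assumes I: "iso_pair A lt B lt' f g" and R: "ranked_of A lt n"
  shows "ranked_of B lt' n"
  unfolding ranked_of_def
proof (intro allI impI)
  fix M assume M: "is_maxchain B lt' M"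
  have MB: "M \<subseteq> B" using M unfolding is_maxchain_def is_chain_def by auto
  have "is_maxchain A lt (g ` M)" using maxchain_iso[OF iso_pair_sym[OF I] M] .
  then have "card (g ` M) = n + 1" using R unfolding ranked_of_def by auto
  moreover have "inj_on g M" using I MB unfolding iso_pair_def inj_on_def by (metis subsetD)
  ultimately show "card M = n + 1" by (simp add: card_image)
qed

lemma ranked_iso: "poset_iso A lt B lt' \<Longrightarrow> ranked A lt \<Longrightarrow> ranked B lt'"
  unfolding ranked_def by (metis poset_iso_pair ranked_of_iso)

lemma slice_iso:
  assumes I: "iso_pair A lt B lt' f g"
  shows "rank_slice B lt' i j = f ` rank_slice A lt i j"
proof -
  have "rank_slice B lt' i j \<subseteq> f ` rank_slice A lt i j"
  proof
    fix y assume y: "y \<in> rank_slice B lt' i j"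
    then have "y \<in> B" unfolding rank_slice_def by auto
    then have "g y \<in> A" "f (g y) = y" using I unfolding iso_pair_def by auto
    then show "y \<in> f ` rank_slice A lt i j" using y prank_iso[OF I, of "g y"]
      unfolding rank_slice_def by (metis (mono_tags, lifting) image_eqI mem_Collect_eq)
  qed
  moreover have "f ` rank_slice A lt i j \<subseteq> rank_slice B lt' i j"
    using I prank_iso[OF I] unfolding rank_slice_def iso_pair_def by auto
  ultimately show ?thesis by auto
qed

lemma six_stack_iso:
  assumes I: "poset_iso A lt B lt'" and S: "six_stack A lt"
  shows "six_stack B lt'"
proof -
  obtain f g where I: "iso_pair A lt B lt' f g" using poset_iso_pair[OF I] by blast
  obtain n where n: "n \<ge> 1" "ranked_of A lt n"
    "\<forall>i<n. poset_iso (rank_slice A lt i (Suc i)) lt crown6_carrier crown6_lt"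
    using S unfolding six_stack_def by blast
  have "poset_iso (rank_slice B lt' i (Suc i)) lt' crown6_carrier crown6_lt" if "i < n" for i
  proof -
    have sub: "rank_slice A lt i (Suc i) \<subseteq> A" unfolding rank_slice_def by auto
    have "poset_iso (rank_slice A lt i (Suc i)) lt (rank_slice B lt' i (Suc i)) lt'"
      using iso_pair_poset[OF poset_iso_sub[OF I sub]] slice_iso[OF I] by simp
    then show ?thesis using poset_iso_sym poset_iso_trans n(3) that by blast
  qed
  then show ?thesis unfolding six_stack_def using n ranked_of_iso[OF I] by blast
qed

lemma two_antichain_iso:
  assumes I: "poset_iso A lt B lt'" and S: "two_antichain A lt"
  shows "two_antichain B lt'"
proof -
  obtain f g where I: "iso_pair A lt B lt' f g" using poset_iso_pair[OF I] by blast
  have "inj_on g B" using I unfolding iso_pair_def inj_on_def by metis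
  moreover have "g ` B = A"
  proof
    show "g ` B \<subseteq> A" using I unfolding iso_pair_def by auto
    show "A \<subseteq> g ` B"
    proof
      fix x assume "x \<in> A"
      then have "f x \<in> B" "g (f x) = x" using I unfolding iso_pair_def by auto
      then show "x \<in> g ` B" by (metis image_eqI)
    qed
  qed
  ultimately have "card B = 2" using S unfolding two_antichain_def by (metis card_image)
  moreover have "\<forall>x\<in>B. \<forall>y\<in>B. \<not> lt' x y" using S I unfolding two_antichain_def iso_pair_def by metis
  ultimately show ?thesis unfolding two_antichain_def by auto
qed




locale sec =
  fixes B :: "(nat \<times> nat) set" and R and n
  assumes P: "is_poset B R" and n: "n \<ge> 1" and Bd: "B = {0..2} \<times> {0..n}"
   and s1: "\<forall>i\<le>2. \<forall>k l. k < l \<and> l \<le> n \<longrightarrow> R (i,k) (i,l)"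
   and s2: "\<forall>k\<le>n. \<forall>i\<le>2. \<forall>j\<le>2. \<not> R (i,k) (j,k)"
   and s3: "\<forall>i\<le>2. \<forall>j\<le>2. \<forall>k\<le>n. \<forall>l\<le>n. R (i,k) (j,l) \<longrightarrow> R ((i+1) mod 3, k) ((j+1) mod 3, l)"
   and s4: "\<forall>k<n. \<exists>i\<le>2. \<exists>j\<le>2. \<not> R (i,k) (j, Suc k)"
begin

lemma trans: "p \<in> B \<Longrightarrow> q \<in> B \<Longrightarrow> r \<in> B \<Longrightarrow> R p q \<Longrightarrow> R q r \<Longrightarrow> R p r"
  using P unfolding is_poset_def by blast

lemma irr: "p \<in> B \<Longrightarrow> \<not> R p p"
  using P unfolding is_poset_def by blast

lemma lv: assumes "p \<in> B" "q \<in> B" "R p q" shows "snd p < snd q"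
proof (rule ccontr)
  obtain a b c d where pq: "p = (a,b)" "q = (c,d)" by fastforce
  have ab: "a \<le> 2" "b \<le> n" "c \<le> 2" "d \<le> n" using assms pq Bd by auto
  assume "\<not> snd p < snd q"
  then have "d \<le> b" using pq by simp
  show False
  proof (cases "d = b")
    case True then show ?thesis using s2 assms pq ab by auto
  next
    case False
    then have "R (c,d) (c,b)" using s1 ab \<open>d \<le> b\<close> by auto
    then have "R (a,b) (c,b)" using trans[of p q "(c,b)"] assms pq ab Bd by auto
    then show ?thesis using s2 ab by auto
  qed
qed

lemma prank_sec: assumes "(i,k) \<in> B" shows "prank B R (i,k) = k"
proof (rule antisym)
  have ik: "i \<le> 2" "k \<le> n" using assms Bd by auto
  obtain f where f: "f (prank B R (i,k)) = (i,k)" "\<forall>t\<le>prank B R (i,k). f t \<in> B"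
    "\<forall>t<prank B R (i,k). R (f t) (f (Suc t))"
    using prank_ex[OF P assms] unfolding chain_to_def by blast
  have "t \<le> prank B R (i,k) \<Longrightarrow> t \<le> snd (f t)" for t
  proof (induction t)
    case 0 then show ?case by simp
  next
    case (Suc t)
    then have "snd (f t) < snd (f (Suc t))" using lv f by auto
    then show ?case using Suc by simp
  qed
  then show "prank B R (i,k) \<le> k" using f by fastforce
  have "chain_to B R k (i,k)" unfolding chain_to_def
    by (rule exI[of _ "\<lambda>t. (i,t)"]) (use ik s1 Bd in auto)
  then show "k \<le> prank B R (i,k)" by (rule prank_ge[OF P])
qed

lemma ranked_n: assumes "ranked B R" shows "ranked_of B R n"
proof -
  obtain n' where n': "ranked_of B R n'" using assms unfolding ranked_def by blast
  define C where "C = (\<lambda>t. (0::nat,t)) ` {0..n}"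
  have "is_maxchain B R C" unfolding is_maxchain_def is_chain_def
  proof (intro conjI allI impI ballI)
    show "C \<subseteq> B" unfolding C_def Bd by auto
    fix x y assume "x \<in> C" "y \<in> C"
    then show "x = y \<or> R x y \<or> R y x" unfolding C_def using s1
      by (auto, metis linorder_neqE_nat zero_le_numeral)
  next
    fix D assume D: "(D \<subseteq> B \<and> (\<forall>x\<in>D. \<forall>y\<in>D. x = y \<or> R x y \<or> R y x)) \<and> C \<subseteq> D"
    show "D = C"
    proof
      show "C \<subseteq> D" using D by auto
      show "D \<subseteq> C"
      proof
        fix x assume x: "x \<in> D"
        then obtain c d where cd: "x = (c,d)" "c \<le> 2" "d \<le> n" using D Bd by auto
        have "(0,d) \<in> D" using D cd unfolding C_def by auto
        then have "x = (0,d)" using D x cd s2 by fastforce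
        then show "x \<in> C" unfolding C_def using cd by auto
      qed
    qed
  qed
  moreover have "card C = n + 1" unfolding C_def by (subst card_image) (auto simp: inj_on_def)
  ultimately show ?thesis using n' unfolding ranked_of_def by auto
qed


context fixes k assumes k: "k < n"
begin

lemma rot_facts:
  shows "R (1,k) (2,Suc k) = R (0,k) (1,Suc k)" "R (2,k) (0,Suc k) = R (0,k) (1,Suc k)"
        "R (1,k) (0,Suc k) = R (0,k) (2,Suc k)" "R (2,k) (1,Suc k) = R (0,k) (2,Suc k)"
  using s3[rule_format, of 0 1 k "Suc k"] s3[rule_format, of 1 2 k "Suc k"] s3[rule_format, of 2 0 k "Suc k"]
        s3[rule_format, of 0 2 k "Suc k"] s3[rule_format, of 2 1 k "Suc k"] s3[rule_format, of 1 0 k "Suc k"] k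
  by (simp_all add: numeral_2_eq_2) blast+

lemma diag: "i \<le> 2 \<Longrightarrow> R (i,k) (i,Suc k)"
  using s1 k by auto

lemma not_both: "\<not> (R (0,k) (1,Suc k) \<and> R (0,k) (2,Suc k))"
proof
  assume h: "R (0,k) (1,Suc k) \<and> R (0,k) (2,Suc k)"
  obtain i j where ij: "i \<le> 2" "j \<le> 2" "\<not> R (i,k) (j,Suc k)" using s4 k by blast
  have "i = 0 \<or> i = 1 \<or> i = 2" "j = 0 \<or> j = 1 \<or> j = 2" using ij by auto
  then show False using ij(3) h rot_facts diag[of 0] diag[of 1] diag[of 2]
    by (elim disjE) simp_all
qed

lemma one_of:
  assumes Nice: "is_nice B R" and Rk: "ranked B R"
  shows "R (0,k) (1,Suc k) \<or> R (0,k) (2,Suc k)"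
proof (rule ccontr)
  assume h: "\<not> (R (0,k) (1,Suc k) \<or> R (0,k) (2,Suc k))"
  have Rn: "ranked_of B R n" using ranked_n[OF Rk] .
  have pB: "(0,k) \<in> B" and qB: "(0,Suc k) \<in> B" using k Bd by auto
  obtain s where s: "s \<in> B" "R s (0,Suc k)" "\<not> (s = (0,k) \<or> R s (0,k))"
    using Nice pB qB diag[of 0] unfolding is_nice_def by blast
  obtain c m where cm: "s = (c,m)" "c \<le> 2" "m \<le> n" using s Bd by auto
  have "m < Suc k" using lv[OF s(1) qB s(2)] cm by simp
  have "m \<noteq> k"
  proof
    assume "m = k"
    have "c = 0 \<or> c = 1 \<or> c = 2" using cm by auto
    then show False using s cm(1) h rot_facts \<open>m = k\<close> by (elim disjE) simp_all
  qed
  then have mk: "m < k" using \<open>m < Suc k\<close> by simp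
  have finB: "finite B" using P unfolding is_poset_def by auto
  define C where "C = (\<lambda>t. (c,t)) ` {0..m} \<union> (\<lambda>t. (0::nat,t)) ` {Suc k..n}"
  have CB: "C \<subseteq> B" unfolding C_def Bd using cm by auto
  have low: "t \<le> m \<Longrightarrow> (c,t) = s \<or> R (c,t) s" for t
    using s1 cm by (cases "t = m") auto
  have high: "Suc k \<le> t \<Longrightarrow> t \<le> n \<Longrightarrow> (0,t) = (0,Suc k) \<or> R (0,Suc k) (0,t)" for t
    using s1 by (cases "t = Suc k") auto
  have "is_chain B R C" unfolding is_chain_def
  proof (intro conjI ballI CB)
    fix x y assume xy: "x \<in> C" "y \<in> C"
    have xB: "x \<in> B" "y \<in> B" using xy CB by auto
    have mix: "R (c,t) (0,t')" if "t \<le> m" "Suc k \<le> t'" "t' \<le> n" for t t'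
    proof -
      have a: "(c,t) \<in> B" "(0,t') \<in> B" using that cm Bd mk by auto
      have "R (c,t) (0,Suc k)" using low[OF that(1)] s trans[OF a(1) s(1) qB] by auto
      then show ?thesis using high[OF that(2,3)] trans[OF a(1) qB a(2)] by auto
    qed
    have same: "(i,t) = (i,t') \<or> R (i,t) (i,t') \<or> R (i,t') (i,t)"
      if "i \<le> 2" "t \<le> n" "t' \<le> n" for i t t'
      using s1 that by (cases t t' rule: linorder_cases) auto
    have xc: "(\<exists>t\<le>m. x = (c,t)) \<or> (\<exists>t. Suc k \<le> t \<and> t \<le> n \<and> x = (0,t))"
     and yc: "(\<exists>t\<le>m. y = (c,t)) \<or> (\<exists>t. Suc k \<le> t \<and> t \<le> n \<and> y = (0,t))"
      using xy unfolding C_def by auto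
    show "x = y \<or> R x y \<or> R y x"
    proof -
      { fix t t' assume "t \<le> m" "t' \<le> m" "x = (c,t)" "y = (c,t')"
        then have ?thesis using same[of c t t'] cm by auto }
      moreover
      { fix t t' assume "t \<le> m" "Suc k \<le> t'" "t' \<le> n" "x = (c,t)" "y = (0,t')"
        then have ?thesis using mix by auto }
      moreover
      { fix t t' assume "t \<le> m" "Suc k \<le> t'" "t' \<le> n" "y = (c,t)" "x = (0,t')"
        then have ?thesis using mix by auto }
      moreover
      { fix t t' assume "Suc k \<le> t" "t \<le> n" "Suc k \<le> t'" "t' \<le> n" "x = (0,t)" "y = (0,t')"
        then have ?thesis using same[of 0 t t'] by auto }
      ultimately show ?thesis using xc yc by blast
    qed
  qed
  then obtain M where M: "is_maxchain B R M" "C \<subseteq> M"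
    using maxchain_ext[OF finB] by blast
  have "k \<in> prank B R ` M" using maxchain_ranks[OF P Rn M(1)] k by auto
  then obtain z where z: "z \<in> M" "prank B R z = k" by blast
  have MB: "M \<subseteq> B" and MC: "\<forall>x\<in>M. \<forall>y\<in>M. x = y \<or> R x y \<or> R y x"
    using M unfolding is_maxchain_def is_chain_def by auto
  have zB: "z \<in> B" using z MB by auto
  obtain e kk where ez: "z = (e,kk)" "e \<le> 2" "kk \<le> n" using zB Bd by (cases z) auto
  have "kk = k" using prank_sec z ez MB by auto
  have sM: "s \<in> M" and qM: "(0,Suc k) \<in> M" using M(2) cm k unfolding C_def by auto
  have "R s z"
  proof -
    have "s \<noteq> z" using ez cm mk \<open>kk = k\<close> by auto
    moreover have "\<not> R z s" using lv[OF zB s(1)] ez cm mk \<open>kk = k\<close> by auto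
    ultimately show ?thesis using MC sM z by blast
  qed
  moreover have "R z (0,Suc k)"
  proof -
    have "z \<noteq> (0,Suc k)" using ez \<open>kk = k\<close> by auto
    moreover have "\<not> R (0,Suc k) z" using lv[OF qB zB] ez \<open>kk = k\<close> by auto
    ultimately show ?thesis using MC qM z by blast
  qed
  moreover have "e = 0 \<or> e = 1 \<or> e = 2" using ez by auto
  ultimately show False
    using ez(1) \<open>kk = k\<close> h rot_facts s(3) by (elim disjE) simp_all
qed

lemma slice_eq: "rank_slice B R k (Suc k) = {(0,k),(1,k),(2,k),(0,Suc k),(1,Suc k),(2,Suc k)}"
proof -
  have "rank_slice B R k (Suc k) = {p \<in> B. k \<le> snd p \<and> snd p \<le> Suc k}"
    unfolding rank_slice_def using prank_sec by (intro Collect_cong) auto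
  also have "\<dots> = {(0,k),(1,k),(2,k),(0,Suc k),(1,Suc k),(2,Suc k)}"
    using k unfolding Bd by auto
  finally show ?thesis .
qed


lemma slice_crown:
  assumes Nice: "is_nice B R" and Rk: "ranked B R"
  shows "poset_iso (rank_slice B R k (Suc k)) R crown6_carrier crown6_lt"
proof -
  have L0: "\<not> R (i,k) (j,k)" if "i \<le> 2" "j \<le> 2" for i j using s2 k that by auto
  have L1: "\<not> R (i,Suc k) (j,Suc k)" if "i \<le> 2" "j \<le> 2" for i j using s2 k that by auto
  have Ld: "\<not> R (i,Suc k) (j,k)" if "i \<le> 2" "j \<le> 2" for i j
    using lv[of "(i,Suc k)" "(j,k)"] k that Bd by auto
  note facts = L0 L1 Ld diag rot_facts
  define S where "S = {(0::nat,k),(1,k),(2,k),(0,Suc k),(1,Suc k),(2,Suc k)}"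
  have cc: "crown6_carrier = {0,1,2,3,4,5}" by (simp add: crown6_carrier_def)
  show ?thesis
  proof (cases "R (0,k) (1,Suc k)")
    case True
    then have nb: "\<not> R (0,k) (2,Suc k)" using not_both by auto
    define f where "f p = (if p = (0::nat,k) then 0 else if p = (1,k) then 1 else if p = (2,k) then 2
       else if p = (0,Suc k) then 5 else if p = (1, Suc k) then 3 else (4::nat))" for p
    define g where "g x = (if x = (0::nat) then (0,k) else if x = 1 then (1,k) else if x = 2 then (2,k)
       else if x = 5 then (0,Suc k) else if x = 3 then (1,Suc k) else (2::nat,Suc k))" for x
    have "iso_pair S R crown6_carrier crown6_lt f g"
      unfolding iso_pair_def S_def cc f_def g_def
      using True nb facts by (simp add: crown6_lt_def)
    then show ?thesis using iso_pair_poset slice_eq S_def by metis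
  next
    case False
    then have nb: "R (0,k) (2,Suc k)" using one_of[OF Nice Rk] by auto
    define f where "f p = (if p = (0::nat,k) then 0 else if p = (1,k) then 1 else if p = (2,k) then 2
       else if p = (0,Suc k) then 3 else if p = (1, Suc k) then 4 else (5::nat))" for p
    define g where "g x = (if x = (0::nat) then (0,k) else if x = 1 then (1,k) else if x = 2 then (2,k)
       else if x = 3 then (0,Suc k) else if x = 4 then (1,Suc k) else (2::nat,Suc k))" for x
    have "iso_pair S R crown6_carrier crown6_lt f g"
      unfolding iso_pair_def S_def cc f_def g_def
      using False nb facts by (simp add: crown6_lt_def)
    then show ?thesis using iso_pair_poset slice_eq S_def by metis
  qed
qed

end

lemma sec_six_stack:
  assumes Nice: "is_nice B R" and Rk: "ranked B R"
  shows "six_stack B R"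
  unfolding six_stack_def using n ranked_n[OF Rk] slice_crown[OF _ Nice Rk] by blast

end


lemma nice_section_cases:
  assumes N: "nice_section B R" and Rk: "ranked B R"
  shows "two_antichain B R \<or> six_stack B R"
proof -
  have P: "is_poset B R" and Nc: "is_nice B R" using N unfolding nice_section_def is_section_def by auto
  have sc: "is_section B R" using N unfolding nice_section_def by auto
  have disj: "two_antichain B R \<or> (\<exists>n\<ge>1. B = {0..2} \<times> {0..n} \<and>
        (\<forall>i\<le>2. \<forall>k l. k < l \<and> l \<le> n \<longrightarrow> R (i,k) (i,l)) \<and>
        (\<forall>k\<le>n. \<forall>i\<le>2. \<forall>j\<le>2. \<not> R (i,k) (j,k)) \<and>
        (\<forall>i\<le>2. \<forall>j\<le>2. \<forall>k\<le>n. \<forall>l\<le>n. R (i,k) (j,l) \<longrightarrow>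
            R ((i+1) mod 3, k) ((j+1) mod 3, l)) \<and>
        (\<forall>k<n. \<exists>i\<le>2. \<exists>j\<le>2. \<not> R (i,k) (j, Suc k)))"
    using sc unfolding is_section_def by (rule conjunct2)
  then show ?thesis
  proof
    assume "two_antichain B R" then show ?thesis by simp
  next
    assume "\<exists>n\<ge>1. B = {0..2} \<times> {0..n} \<and>
        (\<forall>i\<le>2. \<forall>k l. k < l \<and> l \<le> n \<longrightarrow> R (i,k) (i,l)) \<and>
        (\<forall>k\<le>n. \<forall>i\<le>2. \<forall>j\<le>2. \<not> R (i,k) (j,k)) \<and>
        (\<forall>i\<le>2. \<forall>j\<le>2. \<forall>k\<le>n. \<forall>l\<le>n. R (i,k) (j,l) \<longrightarrow>
            R ((i+1) mod 3, k) ((j+1) mod 3, l)) \<and>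
        (\<forall>k<n. \<exists>i\<le>2. \<exists>j\<le>2. \<not> R (i,k) (j, Suc k))"
    then obtain n where H: "n\<ge>1 \<and> B = {0..2} \<times> {0..n} \<and>
        (\<forall>i\<le>2. \<forall>k l. k < l \<and> l \<le> n \<longrightarrow> R (i,k) (i,l)) \<and>
        (\<forall>k\<le>n. \<forall>i\<le>2. \<forall>j\<le>2. \<not> R (i,k) (j,k)) \<and>
        (\<forall>i\<le>2. \<forall>j\<le>2. \<forall>k\<le>n. \<forall>l\<le>n. R (i,k) (j,l) \<longrightarrow>
            R ((i+1) mod 3, k) ((j+1) mod 3, l)) \<and>
        (\<forall>k<n. \<exists>i\<le>2. \<exists>j\<le>2. \<not> R (i,k) (j, Suc k))" by (rule exE)
    interpret sec B R n using P H by unfold_locales auto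
    show ?thesis using sec_six_stack[OF Nc Rk] by simp
  qed
qed




definition cB :: "nat \<Rightarrow> (nat \<times> nat) set" where "cB n = {0..2} \<times> {0..n}"
definition cR :: "nat \<times> nat \<Rightarrow> nat \<times> nat \<Rightarrow> bool" where
  "cR p q \<longleftrightarrow> snd p < snd q \<and> (Suc (snd p) < snd q \<or> fst q = fst p \<or> fst q = (fst p + 1) mod 3)"

lemma three_cases: "(i::nat) \<le> 2 \<Longrightarrow> i = 0 \<or> i = 1 \<or> i = 2" by auto

lemma cR_trans: "cR p q \<Longrightarrow> cR q r \<Longrightarrow> cR p r"
  unfolding cR_def by (intro conjI disjI1) linarith+

lemma canon_nice: assumes n: "n \<ge> 1" shows "nice_section (cB n) cR"
proof -
  have P: "is_poset (cB n) cR" unfolding is_poset_def using cR_trans by (auto simp: cB_def cR_def)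
  have S: "is_section (cB n) cR"
    unfolding is_section_def
  proof (intro conjI disjI2 P exI[of _ n])
    show "n \<ge> 1" by fact
    show "cB n = {0..2} \<times> {0..n}" by (simp add: cB_def)
    show "\<forall>i\<le>2. \<forall>k l. k < l \<and> l \<le> n \<longrightarrow> cR (i,k) (i,l)" by (simp add: cR_def)
    show "\<forall>k\<le>n. \<forall>i\<le>2. \<forall>j\<le>2. \<not> cR (i,k) (j,k)" by (simp add: cR_def)
    show "\<forall>i\<le>2. \<forall>j\<le>2. \<forall>k\<le>n. \<forall>l\<le>n. cR (i,k) (j,l) \<longrightarrow> cR ((i+1) mod 3, k) ((j+1) mod 3, l)"
    proof (intro allI impI)
      fix i j k l assume h: "i \<le> 2" "j \<le> 2" "k \<le> n" "l \<le> n" "cR (i,k) (j,l)"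
      show "cR ((i+1) mod 3, k) ((j+1) mod 3, l)"
        using h(5) by (simp only: cR_def fst_conv snd_conv) blast
    qed
    show "\<forall>k<n. \<exists>i\<le>2. \<exists>j\<le>2. \<not> cR (i,k) (j, Suc k)"
    proof (intro allI impI)
      fix k have "\<not> cR (0,k) (2,Suc k)" by (simp add: cR_def)
      then show "\<exists>i\<le>2. \<exists>j\<le>2. \<not> cR (i,k) (j, Suc k)" by blast
    qed
  qed
  have N: "is_nice (cB n) cR"
    unfolding is_nice_def
  proof (intro ballI impI conjI)
    fix p q assume pq: "p \<in> cB n" "q \<in> cB n" "cR p q"
    obtain i k j l where ik: "p = (i,k)" "q = (j,l)" by fastforce
    have b: "i \<le> 2" "j \<le> 2" "k \<le> n" "l \<le> n" using pq ik by (auto simp: cB_def)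
    have kl: "k < l" using pq ik by (auto simp: cR_def)
    have m1: "(i+1) mod 3 \<noteq> i" "(i+2) mod 3 \<noteq> i" "((i+2) mod 3 + 1) mod 3 = i"
      using three_cases[OF b(1)] by (elim disjE; simp)+
    show "\<exists>r\<in>cB n. cR p r \<and> \<not> (q = r \<or> cR q r)"
    proof (cases "l = Suc k")
      case True
      then have jj: "j = i \<or> j = (i+1) mod 3" using pq ik by (auto simp: cR_def)
      show ?thesis
      proof (cases "j = i")
        case True
        show ?thesis
          by (rule bexI[of _ "((i+1) mod 3, Suc k)"]) (use True \<open>l = Suc k\<close> ik b m1 in \<open>auto simp: cR_def cB_def\<close>)
      next
        case False
        show ?thesis
          by (rule bexI[of _ "(i, Suc k)"]) (use False \<open>l = Suc k\<close> ik b in \<open>auto simp: cR_def cB_def\<close>)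
      qed
    next
      case False
      then show ?thesis using kl b ik
        by (intro bexI[of _ "(i, Suc k)"]) (auto simp: cR_def cB_def)
    qed
    show "\<exists>s\<in>cB n. cR s q \<and> \<not> (s = p \<or> cR s p)"
    proof (cases "l = Suc k")
      case True
      then have jj: "j = i \<or> j = (i+1) mod 3" using pq ik by (auto simp: cR_def)
      show ?thesis
      proof (cases "j = i")
        case True
        show ?thesis
          by (rule bexI[of _ "((i+2) mod 3, k)"]) (use True \<open>l = Suc k\<close> ik b m1 in \<open>auto simp: cR_def cB_def\<close>)
      next
        case False
        then have "j = (i+1) mod 3" using jj by simp
        show ?thesis
          by (rule bexI[of _ "(j, k)"]) (use False \<open>l = Suc k\<close> ik b in \<open>auto simp: cR_def cB_def\<close>)
      qed
    next
      case False
      then show ?thesis using kl b ik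
        by (intro bexI[of _ "(j, l - 1)"]) (auto simp: cR_def cB_def)
    qed
  qed
  show ?thesis using S N unfolding nice_section_def by simp
qed




lemma crown_range: "crown6_lt x y \<Longrightarrow> x \<in> {0,1,2} \<and> y \<in> {3,4,5}"
  by (auto simp: crown6_lt_def)

lemma crown_up: "x \<in> {0,1,2} \<Longrightarrow> y \<in> {0,1,2} \<Longrightarrow> x \<noteq> y \<Longrightarrow>
   \<exists>z\<in>crown6_carrier. crown6_lt x z \<and> crown6_lt y z"
  unfolding crown6_carrier_def crown6_lt_def by auto

lemma crown_not3: "x \<in> {0,1,2} \<Longrightarrow> y \<in> {0,1,2} \<Longrightarrow> w \<in> {0,1,2} \<Longrightarrow> x \<noteq> y \<Longrightarrow> x \<noteq> w \<Longrightarrow> y \<noteq> w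
  \<Longrightarrow> \<not> (crown6_lt x z \<and> crown6_lt y z \<and> crown6_lt w z)"
  unfolding crown6_lt_def by auto

lemma crown_below: "z \<in> {3,4,5} \<Longrightarrow> \<exists>x\<in>crown6_carrier. crown6_lt x z"
  unfolding crown6_carrier_def crown6_lt_def by auto

locale stk =
  fixes A :: "'a set" and lt and n
  assumes P: "is_poset A lt" and n: "n \<ge> 1" and Rn: "ranked_of A lt n"
   and Sl: "\<forall>k<n. poset_iso (rank_slice A lt k (Suc k)) lt crown6_carrier crown6_lt"
begin

definition L where "L k = {p\<in>A. prank A lt p = k}"

lemma slice_L: "rank_slice A lt k (Suc k) = L k \<union> L (Suc k)"
  unfolding rank_slice_def L_def by auto

lemma slice_data:
  assumes k: "k < n"
  shows "\<exists>h g. iso_pair (L k \<union> L (Suc k)) lt crown6_carrier crown6_lt h g \<and>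
    (\<forall>p\<in>L k. h p \<in> {0,1,2}) \<and> (\<forall>p\<in>L (Suc k). h p \<in> {3,4,5})"
proof -
  obtain h g where I: "iso_pair (L k \<union> L (Suc k)) lt crown6_carrier crown6_lt h g"
    using Sl k slice_L poset_iso_pair by metis
  have I1: "\<forall>x\<in>L k \<union> L (Suc k). h x \<in> crown6_carrier \<and> g (h x) = x"
   and I2: "\<forall>y\<in>crown6_carrier. g y \<in> L k \<union> L (Suc k) \<and> h (g y) = y"
   and I3: "\<forall>x\<in>L k \<union> L (Suc k). \<forall>y\<in>L k \<union> L (Suc k). lt x y \<longleftrightarrow> crown6_lt (h x) (h y)"
    using I unfolding iso_pair_def by auto
  have hu: "\<forall>p\<in>L (Suc k). h p \<in> {3,4,5}"
  proof
    fix p assume p: "p \<in> L (Suc k)"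
    then obtain q where q: "q \<in> A" "lt q p" "prank A lt q = k"
      using prank_pred[OF P] unfolding L_def by blast
    then have "q \<in> L k" unfolding L_def by auto
    then have "crown6_lt (h q) (h p)" using I3 p q by auto
    then show "h p \<in> {3,4,5}" using crown_range by blast
  qed
  have hl: "\<forall>p\<in>L k. h p \<in> {0,1,2}"
  proof
    fix p assume p: "p \<in> L k"
    show "h p \<in> {0,1,2}"
    proof (rule ccontr)
      assume "h p \<notin> {0,1,2}"
      moreover have "h p \<in> crown6_carrier" using I1 p by auto
      ultimately have "h p \<in> {3,4,5}" unfolding crown6_carrier_def by auto
      then obtain x where x: "x \<in> crown6_carrier" "crown6_lt x (h p)" using crown_below by blast
      have gx: "g x \<in> L k \<union> L (Suc k)" "h (g x) = x" using I2 x by auto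
      then have "lt (g x) p" using I3 p x by auto
      moreover have "g x \<in> A" "p \<in> A" using gx p unfolding L_def by auto
      ultimately have "prank A lt (g x) < prank A lt p" using prank_less[OF P] by blast
      then show False using gx p unfolding L_def by auto
    qed
  qed
  show ?thesis using I hl hu by blast
qed

lemma C1:
  assumes k: "k < n" and ab: "a \<in> L k" "b \<in> L k" "a \<noteq> b"
  shows "\<exists>c\<in>L (Suc k). lt a c \<and> lt b c"
proof -
  obtain h g where I: "iso_pair (L k \<union> L (Suc k)) lt crown6_carrier crown6_lt h g"
    and hl: "\<forall>p\<in>L k. h p \<in> {0,1,2}" and hu: "\<forall>p\<in>L (Suc k). h p \<in> {3,4,5}"
    using slice_data[OF k] by blast
  have I1: "\<forall>x\<in>L k \<union> L (Suc k). h x \<in> crown6_carrier \<and> g (h x) = x"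
   and I2: "\<forall>y\<in>crown6_carrier. g y \<in> L k \<union> L (Suc k) \<and> h (g y) = y"
   and I3: "\<forall>x\<in>L k \<union> L (Suc k). \<forall>y\<in>L k \<union> L (Suc k). lt x y \<longleftrightarrow> crown6_lt (h x) (h y)"
    using I unfolding iso_pair_def by auto
  have "h a \<noteq> h b" using I1 ab by (metis UnI1)
  then obtain z where z: "z \<in> crown6_carrier" "crown6_lt (h a) z" "crown6_lt (h b) z"
    using crown_up hl ab by meson
  have gz: "g z \<in> L k \<union> L (Suc k)" "h (g z) = z" using I2 z by auto
  have "g z \<notin> L k" using hl gz crown_range[OF z(2)] by auto
  then have "g z \<in> L (Suc k)" using gz by auto
  moreover have "lt a (g z)" "lt b (g z)" using I3 gz z ab by auto
  ultimately show ?thesis by blast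
qed

lemma C2:
  assumes k: "k < n" and abd: "a \<in> L k" "b \<in> L k" "d \<in> L k" "a \<noteq> b" "a \<noteq> d" "b \<noteq> d"
    and c: "c \<in> L (Suc k)"
  shows "\<not> (lt a c \<and> lt b c \<and> lt d c)"
proof -
  obtain h g where I: "iso_pair (L k \<union> L (Suc k)) lt crown6_carrier crown6_lt h g"
    and hl: "\<forall>p\<in>L k. h p \<in> {0,1,2}" and hu: "\<forall>p\<in>L (Suc k). h p \<in> {3,4,5}"
    using slice_data[OF k] by blast
  have I1: "\<forall>x\<in>L k \<union> L (Suc k). h x \<in> crown6_carrier \<and> g (h x) = x"
   and I3: "\<forall>x\<in>L k \<union> L (Suc k). \<forall>y\<in>L k \<union> L (Suc k). lt x y \<longleftrightarrow> crown6_lt (h x) (h y)"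
    using I unfolding iso_pair_def by auto
  have "h a \<noteq> h b" "h a \<noteq> h d" "h b \<noteq> h d" using I1 abd by (metis UnI1)+
  then have "\<not> (crown6_lt (h a) (h c) \<and> crown6_lt (h b) (h c) \<and> crown6_lt (h d) (h c))"
    using crown_not3 hl abd by blast
  then show ?thesis using I3 abd c by auto
qed

lemma C3:
  assumes k: "k < n"
  shows "finite (L (Suc k)) \<and> card (L (Suc k)) \<le> 3"
proof -
  obtain h g where I: "iso_pair (L k \<union> L (Suc k)) lt crown6_carrier crown6_lt h g"
    and hu: "\<forall>p\<in>L (Suc k). h p \<in> {3,4,5}"
    using slice_data[OF k] by blast
  have I1: "\<forall>x\<in>L k \<union> L (Suc k). h x \<in> crown6_carrier \<and> g (h x) = x"
    using I unfolding iso_pair_def by auto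
  have fin: "finite (L (Suc k))" using P unfolding is_poset_def L_def by auto
  have "inj_on h (L (Suc k))" using I1 by (intro inj_on_inverseI[of _ g]) auto
  then have "card (L (Suc k)) = card (h ` L (Suc k))" by (simp add: card_image)
  also have "\<dots> \<le> card {3::nat,4,5}" using hu by (intro card_mono) auto
  finally show ?thesis using fin by simp
qed

lemma C0: "\<exists>e. bij_betw e {0..2::nat} (L 0)"
proof -
  have k: "0 < n" using n by simp
  obtain h g where I: "iso_pair (L 0 \<union> L (Suc 0)) lt crown6_carrier crown6_lt h g"
    and hl: "\<forall>p\<in>L 0. h p \<in> {0,1,2}" and hu: "\<forall>p\<in>L (Suc 0). h p \<in> {3,4,5}"
    using slice_data[OF k] by blast
  have I1: "\<forall>x\<in>L 0 \<union> L (Suc 0). h x \<in> crown6_carrier \<and> g (h x) = x"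
   and I2: "\<forall>y\<in>crown6_carrier. g y \<in> L 0 \<union> L (Suc 0) \<and> h (g y) = y"
    using I unfolding iso_pair_def by auto
  have cc: "{0..2::nat} \<subseteq> crown6_carrier" unfolding crown6_carrier_def by auto
  have "bij_betw g {0..2} (L 0)"
    unfolding bij_betw_def
  proof
    show "inj_on g {0..2}" using I2 cc by (intro inj_on_inverseI[of _ h]) auto
    show "g ` {0..2} = L 0"
    proof
      show "g ` {0..2} \<subseteq> L 0"
      proof
        fix x assume "x \<in> g ` {0..2}"
        then obtain i where i: "i \<in> {0..2}" "x = g i" by auto
        then have "x \<in> L 0 \<union> L (Suc 0)" "h x = i" using I2 cc by auto
        then show "x \<in> L 0" using hu i by auto
      qed
      show "L 0 \<subseteq> g ` {0..2}"
      proof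
        fix p assume p: "p \<in> L 0"
        then have "h p \<in> {0..2}" "g (h p) = p" using hl I1 by auto
        then show "p \<in> g ` {0..2}" by (metis image_eqI)
      qed
    qed
  qed
  then show ?thesis by blast
qed


definition e0 where "e0 = (SOME e. bij_betw e {0..2::nat} (L 0))"

primrec gg :: "nat \<Rightarrow> nat \<Rightarrow> 'a" where
  "gg 0 = e0"
| "gg (Suc k) = (\<lambda>i. SOME c. c \<in> L (Suc k) \<and> lt (gg k i) c \<and> lt (gg k ((i+2) mod 3)) c)"

declare gg.simps(2)[simp del]

lemma m3: assumes "i \<le> 2" shows "(i+2) mod 3 \<noteq> (i::nat) \<and> (i+2) mod 3 \<le> 2 \<and> (i+1) mod 3 \<le> 2"
  using three_cases[OF assms] by (elim disjE; simp)

lemma up: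
  assumes k: "k < n" and B: "bij_betw (gg k) {0..2} (L k)" and i: "i \<le> 2"
  shows "gg (Suc k) i \<in> L (Suc k) \<and> lt (gg k i) (gg (Suc k) i) \<and> lt (gg k ((i+2) mod 3)) (gg (Suc k) i)"
proof -
  have "gg k i \<in> L k" "gg k ((i+2) mod 3) \<in> L k" using B i m3[OF i] bij_betwE by fastforce+
  moreover have "gg k i \<noteq> gg k ((i+2) mod 3)"
    using B i m3[OF i] unfolding bij_betw_def inj_on_def by (metis atLeastAtMost_iff zero_le)
  ultimately have "\<exists>c. c \<in> L (Suc k) \<and> lt (gg k i) c \<and> lt (gg k ((i+2) mod 3)) c"
    using C1[OF k] by blast
  then show ?thesis unfolding gg.simps by (rule someI_ex)
qed

lemma three_below:
  assumes k: "k < n" and B: "bij_betw (gg k) {0..2} (L k)" and c: "c \<in> L (Suc k)"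
  shows "\<not> (lt (gg k 0) c \<and> lt (gg k 1) c \<and> lt (gg k 2) c)"
proof -
  have "gg k 0 \<in> L k" "gg k 1 \<in> L k" "gg k 2 \<in> L k" using B bij_betwE by fastforce+
  moreover have "gg k a \<noteq> gg k b" if "a \<le> 2" "b \<le> 2" "a \<noteq> b" for a b
    using B that unfolding bij_betw_def inj_on_def by auto
  then have "gg k 0 \<noteq> gg k 1" "gg k 0 \<noteq> gg k 2" "gg k 1 \<noteq> gg k 2" by auto
  ultimately show ?thesis using C2[OF k _ _ _ _ _ _ c] by blast
qed

lemma step:
  assumes k: "k < n" and B: "bij_betw (gg k) {0..2} (L k)"
  shows "bij_betw (gg (Suc k)) {0..2} (L (Suc k))"
proof -
  note u = up[OF k B]
  have inj: "inj_on (gg (Suc k)) {0..2}"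
  proof (rule inj_onI, rule ccontr)
    fix i j assume ij: "i \<in> {0..2::nat}" "j \<in> {0..2::nat}" "gg (Suc k) i = gg (Suc k) j" "i \<noteq> j"
    define c where "c = gg (Suc k) i"
    have cL: "c \<in> L (Suc k)" using u ij unfolding c_def by auto
    have "lt (gg k i) c" "lt (gg k ((i+2) mod 3)) c" "lt (gg k j) c" "lt (gg k ((j+2) mod 3)) c"
      using u[of i] u[of j] ij unfolding c_def by auto
    moreover have "i = 0 \<or> i = 1 \<or> i = 2" "j = 0 \<or> j = 1 \<or> j = 2" using ij by auto
    ultimately have "lt (gg k 0) c \<and> lt (gg k 1) c \<and> lt (gg k 2) c"
      using ij(4) by (elim disjE) (simp_all add: numeral_2_eq_2)
    then show False using three_below[OF k B cL] by blast
  qed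
  have sub: "gg (Suc k) ` {0..2} \<subseteq> L (Suc k)" using u by auto
  have "card (gg (Suc k) ` {0..2}) = 3" using inj by (simp add: card_image)
  then have "gg (Suc k) ` {0..2} = L (Suc k)" using C3[OF k] sub by (intro card_seteq) auto
  then show ?thesis using inj unfolding bij_betw_def by blast
qed

lemma inv: "k \<le> n \<Longrightarrow> bij_betw (gg k) {0..2} (L k)"
proof (induction k)
  case 0
  show ?case unfolding gg.simps e0_def by (rule someI_ex[OF C0])
next
  case (Suc k)
  then show ?case using step by simp
qed

lemma rel:
  assumes k: "k < n" and i: "i \<le> 2" and j: "j \<le> 2"
  shows "lt (gg k i) (gg (Suc k) j) \<longleftrightarrow> (j = i \<or> j = (i+1) mod 3)"
proof -
  have B: "bij_betw (gg k) {0..2} (L k)" using inv k by simp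
  note u = up[OF k B]
  have cL: "gg (Suc k) j \<in> L (Suc k)" using u j by auto
  have a: "lt (gg k j) (gg (Suc k) j)" "lt (gg k ((j+2) mod 3)) (gg (Suc k) j)" using u j by auto
  have "i = 0 \<or> i = 1 \<or> i = 2" "j = 0 \<or> j = 1 \<or> j = 2" using i j by auto
  then show ?thesis using a three_below[OF k B cL] by (elim disjE) (simp_all add: numeral_2_eq_2)
qed


lemma ggA: "k \<le> n \<Longrightarrow> i \<le> 2 \<Longrightarrow> gg k i \<in> L k"
  using inv bij_betwE by fastforce

lemma LA: "L k \<subseteq> A" unfolding L_def by auto

lemma ggA': "k \<le> n \<Longrightarrow> i \<le> 2 \<Longrightarrow> gg k i \<in> A"
  using ggA LA by blast

lemma ltrans: "x \<in> A \<Longrightarrow> y \<in> A \<Longrightarrow> z \<in> A \<Longrightarrow> lt x y \<Longrightarrow> lt y z \<Longrightarrow> lt x z"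
  using P unfolding is_poset_def by blast

lemma far2:
  assumes k: "k + 2 \<le> n" and i: "i \<le> 2" and j: "j \<le> 2"
  shows "lt (gg k i) (gg (k+2) j)"
proof -
  define m where "m = (if j = (i+2) mod 3 then (i+1) mod 3 else i)"
  have m: "m \<le> 2" using m3[OF i] i unfolding m_def by auto
  have "i = 0 \<or> i = 1 \<or> i = 2" "j = 0 \<or> j = 1 \<or> j = 2" using i j by auto
  then have mm: "(m = i \<or> m = (i+1) mod 3) \<and> (j = m \<or> j = (m+1) mod 3)"
    unfolding m_def by (elim disjE) simp_all
  have k1: "k < n" "Suc k < n" using k by auto
  have 1: "lt (gg k i) (gg (Suc k) m)" using rel[OF k1(1) i m] mm by blast
  have 2: "lt (gg (Suc k) m) (gg (Suc (Suc k)) j)" using rel[OF k1(2) m j] mm by blast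
  have "gg k i \<in> A" "gg (Suc k) m \<in> A" "gg (Suc (Suc k)) j \<in> A"
    using ggA'[OF _ i, of k] ggA'[OF _ m, of "Suc k"] ggA'[OF _ j, of "Suc (Suc k)"] k1 by simp_all
  then have "lt (gg k i) (gg (Suc (Suc k)) j)" using ltrans 1 2 by blast
  then show ?thesis by (simp add: add_2_eq_Suc')
qed

lemma far:
  assumes "2 \<le> d" "k + d \<le> n" "i \<le> 2" "j \<le> 2"
  shows "lt (gg k i) (gg (k+d) j)"
  using assms
proof (induction d arbitrary: k rule: nat_induct_at_least)
  case base then show ?case using far2[of k i j] by blast
next
  case (Suc d)
  have k1: "k < n" "Suc k + d \<le> n" using Suc.prems(1) by simp_all
  have 1: "lt (gg k i) (gg (Suc k) i)" using rel[OF k1(1) Suc.prems(2) Suc.prems(2)] by blast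
  have 2: "lt (gg (Suc k) i) (gg (Suc k + d) j)" using Suc.IH[OF k1(2) Suc.prems(2,3)] .
  have m: "gg k i \<in> A" "gg (Suc k) i \<in> A" "gg (Suc k + d) j \<in> A"
    using ggA'[OF _ Suc.prems(2), of k] ggA'[OF _ Suc.prems(2), of "Suc k"]
      ggA'[OF _ Suc.prems(3), of "Suc k + d"] k1 by simp_all
  show ?case using ltrans[OF m 1 2] by simp
qed

lemma rank_gg: "k \<le> n \<Longrightarrow> i \<le> 2 \<Longrightarrow> prank A lt (gg k i) = k"
  using ggA unfolding L_def by auto

lemma stack_iso: "poset_iso (cB n) cR A lt"
  unfolding poset_iso_def
proof (intro exI[of _ "\<lambda>p. gg (snd p) (fst p)"] conjI ballI)
  show "bij_betw (\<lambda>p. gg (snd p) (fst p)) (cB n) A"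
    unfolding bij_betw_def
  proof
    show "inj_on (\<lambda>p. gg (snd p) (fst p)) (cB n)"
    proof (rule inj_onI)
      fix p q assume pq: "p \<in> cB n" "q \<in> cB n" "gg (snd p) (fst p) = gg (snd q) (fst q)"
      obtain a k b l where ab: "p = (a,k)" "q = (b,l)" by fastforce
      have bd: "a \<le> 2" "k \<le> n" "b \<le> 2" "l \<le> n" using pq ab unfolding cB_def by auto
      have "k = prank A lt (gg k a)" using rank_gg bd by simp
      also have "\<dots> = prank A lt (gg l b)" using pq ab by simp
      also have "\<dots> = l" using rank_gg bd by simp
      finally have "snd p = snd q" using ab by simp
      moreover have "fst p = fst q"
        using pq inv[of "snd p"] calculation unfolding cB_def bij_betw_def inj_on_def by auto
      ultimately show "p = q" by (simp add: prod_eq_iff)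
    qed
    show "(\<lambda>p. gg (snd p) (fst p)) ` cB n = A"
    proof
      show "(\<lambda>p. gg (snd p) (fst p)) ` cB n \<subseteq> A" using ggA' unfolding cB_def by auto
      show "A \<subseteq> (\<lambda>p. gg (snd p) (fst p)) ` cB n"
      proof
        fix x assume x: "x \<in> A"
        define k where "k = prank A lt x"
        have k: "k \<le> n" using rank_le_n[OF P Rn x] k_def by simp
        have "x \<in> L k" using x k_def unfolding L_def by auto
        then have "x \<in> gg k ` {0..2}" using inv[OF k] unfolding bij_betw_def by simp
        then obtain i where "i \<in> {0..2}" "x = gg k i" by blast
        then show "x \<in> (\<lambda>p. gg (snd p) (fst p)) ` cB n" using k unfolding cB_def
          by (intro image_eqI[of _ _ "(i,k)"]) auto
      qed
    qed
  qed
next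
  fix p q assume pq: "p \<in> cB n" "q \<in> cB n"
  obtain i k j l where ik: "p = (i,k)" "q = (j,l)" by fastforce
  have b: "i \<le> 2" "j \<le> 2" "k \<le> n" "l \<le> n" using pq ik by (auto simp: cB_def)
  show "cR p q \<longleftrightarrow> lt (gg (snd p) (fst p)) (gg (snd q) (fst q))"
  proof
    assume c: "cR p q"
    then have kl: "k < l" using ik by (simp add: cR_def)
    show "lt (gg (snd p) (fst p)) (gg (snd q) (fst q))"
    proof (cases "l = Suc k")
      case True
      then show ?thesis using c rel[of k i j] b ik by (auto simp: cR_def)
    next
      case False
      then have "2 \<le> l - k" "k + (l - k) \<le> n" using kl b by auto
      then show ?thesis using far[of "l - k" k i j] b ik kl by simp
    qed
  next
    assume c: "lt (gg (snd p) (fst p)) (gg (snd q) (fst q))"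
    have "gg k i \<in> A" "gg l j \<in> A" using ggA' b by blast+
    then have "prank A lt (gg k i) < prank A lt (gg l j)" using prank_less[OF P] c ik by simp
    then have kl: "k < l" using rank_gg b by simp
    show "cR p q"
    proof (cases "l = Suc k")
      case True
      then show ?thesis using c rel[of k i j] b ik kl by (auto simp: cR_def)
    next
      case False
      then show ?thesis using kl ik by (auto simp: cR_def)
    qed
  qed
qed

end

lemma stack_to_section:
  assumes P: "is_poset A lt" and S: "six_stack A lt"
  shows "\<exists>B R. nice_section B R \<and> poset_iso B R A lt"
proof -
  obtain n where n: "n \<ge> 1" "ranked_of A lt n"
    "\<forall>i<n. poset_iso (rank_slice A lt i (Suc i)) lt crown6_carrier crown6_lt"
    using S unfolding six_stack_def by blast
  interpret stk A lt n using P n by unfold_locales auto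
  show ?thesis using canon_nice[OF n(1)] stack_iso by blast
qed

lemma anti_to_section:
  assumes S: "two_antichain A lt"
  shows "\<exists>B R. nice_section B R \<and> poset_iso B R A lt"
proof -
  obtain a b where ab: "A = {a,b}" "a \<noteq> b" using S unfolding two_antichain_def by (meson card_2_iff)
  define B :: "(nat \<times> nat) set" where "B = {(0,0),(1,0)}"
  define R :: "nat \<times> nat \<Rightarrow> nat \<times> nat \<Rightarrow> bool" where "R = (\<lambda>_ _. False)"
  have "two_antichain B R" unfolding two_antichain_def B_def R_def by simp
  moreover have "is_poset B R" unfolding is_poset_def B_def R_def by simp
  ultimately have "nice_section B R" unfolding nice_section_def is_section_def is_nice_def R_def by simp
  moreover have "poset_iso B R A lt"
    unfolding poset_iso_def
  proof (intro exI[of _ "\<lambda>p. if p = (0,0) then a else b"] conjI)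
    show "bij_betw (\<lambda>p. if p = (0,0) then a else b) B A"
      unfolding bij_betw_def inj_on_def B_def using ab by auto
    show "\<forall>x\<in>B. \<forall>y\<in>B. R x y \<longleftrightarrow> lt (if x = (0,0) then a else b) (if y = (0,0) then a else b)"
      using S ab unfolding two_antichain_def R_def B_def by auto
  qed
  ultimately show ?thesis by blast
qed




lemma osum_iso:
  assumes len: "length Ps = length Qs"
    and I: "\<forall>j<length Ps. poset_iso (fst (Ps!j)) (snd (Ps!j)) (fst (Qs!j)) (snd (Qs!j))"
  shows "poset_iso (osum_carrier Ps) (osum_lt Ps) (osum_carrier Qs) (osum_lt Qs)"
proof -
  have "\<forall>j. \<exists>h. j < length Ps \<longrightarrow> (bij_betw h (fst (Ps!j)) (fst (Qs!j)) \<and>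
      (\<forall>x\<in>fst (Ps!j). \<forall>y\<in>fst (Ps!j). snd (Ps!j) x y \<longleftrightarrow> snd (Qs!j) (h x) (h y)))"
    using I unfolding poset_iso_def by blast
  then obtain H where H: "\<And>j. j < length Ps \<Longrightarrow> bij_betw (H j) (fst (Ps!j)) (fst (Qs!j)) \<and>
      (\<forall>x\<in>fst (Ps!j). \<forall>y\<in>fst (Ps!j). snd (Ps!j) x y \<longleftrightarrow> snd (Qs!j) (H j x) (H j y))"
    by metis
  define F where "F p = (fst p, H (fst p) (snd p))" for p
  show ?thesis
    unfolding poset_iso_def
  proof (intro exI[of _ F] conjI ballI)
    show "bij_betw F (osum_carrier Ps) (osum_carrier Qs)"
      unfolding bij_betw_def
    proof
      show "inj_on F (osum_carrier Ps)"
      proof (rule inj_onI)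
        fix p q assume pq: "p \<in> osum_carrier Ps" "q \<in> osum_carrier Ps" "F p = F q"
        then have e: "fst p = fst q" "H (fst p) (snd p) = H (fst p) (snd q)" unfolding F_def by auto
        have j: "fst p < length Ps" "snd p \<in> fst (Ps ! fst p)" "snd q \<in> fst (Ps ! fst p)"
          using pq e unfolding osum_carrier_def by auto
        then have "snd p = snd q" using H[OF j(1)] e(2) unfolding bij_betw_def inj_on_def by blast
        then show "p = q" using e by (simp add: prod_eq_iff)
      qed
      show "F ` osum_carrier Ps = osum_carrier Qs"
      proof
        show "F ` osum_carrier Ps \<subseteq> osum_carrier Qs"
        proof
          fix y assume "y \<in> F ` osum_carrier Ps"
          then obtain j x where jx: "j < length Ps" "x \<in> fst (Ps!j)" "y = (j, H j x)"
            unfolding osum_carrier_def F_def by auto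
          then show "y \<in> osum_carrier Qs" using H[OF jx(1)] len unfolding osum_carrier_def bij_betw_def by auto
        qed
        show "osum_carrier Qs \<subseteq> F ` osum_carrier Ps"
        proof
          fix y assume "y \<in> osum_carrier Qs"
          then obtain j z where jz: "j < length Ps" "z \<in> fst (Qs!j)" "y = (j, z)"
            unfolding osum_carrier_def using len by auto
          then have "z \<in> H j ` fst (Ps!j)" using H[OF jz(1)] unfolding bij_betw_def by auto
          then obtain x where "x \<in> fst (Ps!j)" "z = H j x" by blast
          then show "y \<in> F ` osum_carrier Ps" using jz unfolding osum_carrier_def F_def
            by (intro image_eqI[of _ _ "(j,x)"]) auto
        qed
      qed
    qed
  next
    fix p q assume pq: "p \<in> osum_carrier Ps" "q \<in> osum_carrier Ps"
    show "osum_lt Ps p q \<longleftrightarrow> osum_lt Qs (F p) (F q)"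
    proof (cases "fst p = fst q")
      case True
      have j: "fst p < length Ps" "snd p \<in> fst (Ps ! fst p)" "snd q \<in> fst (Ps ! fst p)"
        using pq True unfolding osum_carrier_def by auto
      then show ?thesis using H[OF j(1)] True unfolding osum_lt_def F_def by auto
    next
      case False
      then show ?thesis unfolding osum_lt_def F_def by auto
    qed
  qed
qed

lemma osum_fin:
  assumes "\<forall>S\<in>set Ss. finite (fst S)"
  shows "finite (osum_carrier Ss)"
proof -
  have "osum_carrier Ss \<subseteq> (\<Union>j<length Ss. Pair j ` fst (Ss!j))" unfolding osum_carrier_def by auto
  moreover have "finite (\<Union>j<length Ss. Pair j ` fst (Ss!j))" using assms by auto
  ultimately show ?thesis by (rule finite_subset)
qed

lemma chain_part:
  assumes D: "is_chain (osum_carrier Ss) (osum_lt Ss) D" and a: "a < length Ss"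
  shows "is_chain (fst (Ss!a)) (snd (Ss!a)) {y. (a,y) \<in> D}"
  unfolding is_chain_def
proof (intro conjI ballI)
  show "{y. (a,y) \<in> D} \<subseteq> fst (Ss!a)" using D unfolding is_chain_def osum_carrier_def by auto
  fix x y assume "x \<in> {y. (a,y) \<in> D}" "y \<in> {y. (a,y) \<in> D}"
  then have "(a,x) \<in> D" "(a,y) \<in> D" by auto
  then have "(a,x) = (a,y) \<or> osum_lt Ss (a,x) (a,y) \<or> osum_lt Ss (a,y) (a,x)"
    using D unfolding is_chain_def by blast
  then show "x = y \<or> snd (Ss!a) x y \<or> snd (Ss!a) y x" unfolding osum_lt_def by auto
qed

lemma osum_ranked:
  assumes R: "ranked (osum_carrier Ss) (osum_lt Ss)"
    and F: "\<forall>S\<in>set Ss. finite (fst S) \<and> fst S \<noteq> {}" and j: "j < length Ss"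
  shows "ranked (fst (Ss!j)) (snd (Ss!j))"
proof -
  obtain N where N: "ranked_of (osum_carrier Ss) (osum_lt Ss) N" using R unfolding ranked_def by blast
  have ex: "\<exists>M. is_maxchain (fst (Ss!i)) (snd (Ss!i)) M" if "i < length Ss" for i
  proof -
    have "finite (fst (Ss!i))" using F that by auto
    moreover have "is_chain (fst (Ss!i)) (snd (Ss!i)) {}" unfolding is_chain_def by auto
    ultimately show ?thesis using maxchain_ext by blast
  qed
  define M where "M i = (SOME M. is_maxchain (fst (Ss!i)) (snd (Ss!i)) M)" for i
  have M: "is_maxchain (fst (Ss!i)) (snd (Ss!i)) (M i)" if "i < length Ss" for i
    unfolding M_def using ex[OF that] by (rule someI_ex)
  define rest where "rest = {(i,x). i < length Ss \<and> i \<noteq> j \<and> x \<in> M i}"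
  have finO: "finite (osum_carrier Ss)" using osum_fin F by blast
  have Msub: "M i \<subseteq> fst (Ss!i)" if "i < length Ss" for i
    using M[OF that] unfolding is_maxchain_def is_chain_def by blast
  have restO: "rest \<subseteq> osum_carrier Ss"
    using Msub unfolding rest_def osum_carrier_def by auto
  have finr: "finite rest" using finite_subset[OF restO finO] .
  have key: "card C = N + 1 - card rest" if C: "is_maxchain (fst (Ss!j)) (snd (Ss!j)) C" for C
  proof -
    define T where "T = rest \<union> Pair j ` C"
    have CS: "C \<subseteq> fst (Ss!j)" and CC: "\<forall>x\<in>C. \<forall>y\<in>C. x = y \<or> snd (Ss!j) x y \<or> snd (Ss!j) y x"
      using C unfolding is_maxchain_def is_chain_def by auto
    have Mi: "M i \<subseteq> fst (Ss!i)" "\<forall>x\<in>M i. \<forall>y\<in>M i. x = y \<or> snd (Ss!i) x y \<or> snd (Ss!i) y x"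
      if "i < length Ss" for i
      using M[OF that] unfolding is_maxchain_def is_chain_def by auto
    have Tc: "is_chain (osum_carrier Ss) (osum_lt Ss) T"
      unfolding is_chain_def
    proof (intro conjI ballI)
      show "T \<subseteq> osum_carrier Ss" using restO CS j unfolding T_def osum_carrier_def by auto
      fix p q assume pq: "p \<in> T" "q \<in> T"
      show "p = q \<or> osum_lt Ss p q \<or> osum_lt Ss q p"
      proof (cases "fst p = fst q")
        case False then show ?thesis unfolding osum_lt_def by auto
      next
        case True
        show ?thesis
        proof (cases "fst p = j")
          case True
          then have "snd p \<in> C" "snd q \<in> C" "fst q = j" using pq \<open>fst p = fst q\<close> unfolding T_def rest_def by (auto simp: prod_eq_iff)
          then show ?thesis using CC True \<open>fst p = fst q\<close> unfolding osum_lt_def by (metis prod.collapse)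
        next
          case False
          then have "snd p \<in> M (fst p)" "snd q \<in> M (fst p)" "fst p < length Ss"
            using pq \<open>fst p = fst q\<close> unfolding T_def rest_def by auto
          then show ?thesis using Mi(2)[of "fst p"] \<open>fst p = fst q\<close> unfolding osum_lt_def
            by (metis prod.collapse)
        qed
      qed
    qed
    have "is_maxchain (osum_carrier Ss) (osum_lt Ss) T"
      unfolding is_maxchain_def
    proof (intro conjI allI impI Tc)
      fix D assume D: "is_chain (osum_carrier Ss) (osum_lt Ss) D \<and> T \<subseteq> D"
      show "D = T"
      proof
        show "T \<subseteq> D" using D by auto
        show "D \<subseteq> T"
        proof
          fix p assume p: "p \<in> D"
          obtain a x where ax: "p = (a,x)" by fastforce
          have a: "a < length Ss" using p ax D unfolding is_chain_def osum_carrier_def by auto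
          have ch: "is_chain (fst (Ss!a)) (snd (Ss!a)) {y. (a,y) \<in> D}" using chain_part D a by blast
          show "p \<in> T"
          proof (cases "a = j")
            case True
            have "C \<subseteq> {y. (a,y) \<in> D}" using D True unfolding T_def by auto
            then have "{y. (a,y) \<in> D} = C" using C ch True unfolding is_maxchain_def by auto
            then show ?thesis using p ax True unfolding T_def by auto
          next
            case False
            have "M a \<subseteq> {y. (a,y) \<in> D}" using D False a unfolding T_def rest_def by auto
            then have "{y. (a,y) \<in> D} = M a" using M[OF a] ch unfolding is_maxchain_def by auto
            then show ?thesis using p ax False a unfolding T_def rest_def by auto
          qed
        qed
      qed
    qed
    then have "card T = N + 1" using N unfolding ranked_of_def by auto
    moreover have "card T = card rest + card C"
    proof -
      have "finite C" using CS F j by (meson finite_subset nth_mem)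
      moreover have "rest \<inter> Pair j ` C = {}" unfolding rest_def by auto
      ultimately have "card T = card rest + card (Pair j ` C)" unfolding T_def using finr
        by (simp add: card_Un_disjoint)
      moreover have "card (Pair j ` C) = card C" by (simp add: card_image inj_on_def)
      ultimately show ?thesis by simp
    qed
    ultimately show ?thesis by simp
  qed
  have Mj: "is_maxchain (fst (Ss!j)) (snd (Ss!j)) (M j)" using M[OF j] .
  have "M j \<noteq> {}"
  proof
    assume e: "M j = {}"
    obtain x where x: "x \<in> fst (Ss!j)" using F j by (meson ex_in_conv nth_mem)
    have "is_chain (fst (Ss!j)) (snd (Ss!j)) {x}" using x unfolding is_chain_def by auto
    then have "{x} = M j" using Mj e unfolding is_maxchain_def by blast
    then show False using e by auto
  qed
  moreover have "finite (M j)" using Mj F j unfolding is_maxchain_def is_chain_def by (meson finite_subset nth_mem)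
  ultimately have pos: "card (M j) \<ge> 1" by (simp add: Suc_leI card_gt_0_iff)
  have "ranked_of (fst (Ss!j)) (snd (Ss!j)) (card (M j) - 1)"
    unfolding ranked_of_def using key key[OF Mj] pos by auto
  then show ?thesis unfolding ranked_def by blast
qed




lemma section_shape: "is_section B R \<Longrightarrow> two_antichain B R \<or> (\<exists>n. B = {0..2} \<times> {0..n})"
  unfolding is_section_def
  apply (elim conjE disjE exE)
   apply (rule disjI1, assumption)
  apply (rule disjI2, rule exI, assumption)
  done

lemma nice_nonempty: "nice_section B R \<Longrightarrow> finite B \<and> B \<noteq> {}"
proof -
  assume N: "nice_section B R"
  then have sc: "is_section B R" unfolding nice_section_def by (rule conjunct1)
  then have "is_poset B R" unfolding is_section_def by (rule conjunct1)
  then have fin: "finite B" unfolding is_poset_def by (rule conjunct1)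
  have sh: "two_antichain B R \<or> (\<exists>n. B = {0..2} \<times> {0..n})" using section_shape[OF sc] .
  have "B \<noteq> {}"
  proof
    assume e: "B = {}"
    show False using sh
    proof
      assume "two_antichain B R" then show False using e unfolding two_antichain_def by simp
    next
      assume "\<exists>n. B = {0..2} \<times> {0..n}"
      then obtain n where Bn: "B = {0..2} \<times> {0..n}" by (rule exE)
      have "(0,0) \<in> {0..2::nat} \<times> {0..n}" by simp
      then have "(0,0) \<in> B" by (subst Bn)
      then show False using e by (simp only: empty_iff)
    qed
  qed
  then show ?thesis using fin by simp
qed

lemma poset_sub: assumes "is_poset A lt" "S \<subseteq> A" shows "is_poset S lt"
proof -
  have c: "finite A \<and> (\<forall>x\<in>A. \<not> lt x x) \<and> (\<forall>x\<in>A. \<forall>y\<in>A. \<forall>z\<in>A. lt x y \<longrightarrow> lt y z \<longrightarrow> lt x z)"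
    using assms(1) unfolding is_poset_def .
  have f: "finite A" using c by (rule conjunct1)
  have i: "\<forall>x\<in>A. \<not> lt x x" using c by (rule conjunct1[OF conjunct2])
  have t: "\<forall>x\<in>A. \<forall>y\<in>A. \<forall>z\<in>A. lt x y \<longrightarrow> lt y z \<longrightarrow> lt x z" using c by (rule conjunct2[OF conjunct2])
  have "finite S" using finite_subset[OF assms(2) f] .
  moreover have "\<forall>x\<in>S. \<not> lt x x" using i assms(2) by blast
  moreover have "\<forall>x\<in>S. \<forall>y\<in>S. \<forall>z\<in>S. lt x y \<longrightarrow> lt y z \<longrightarrow> lt x z"
  proof (intro ballI impI)
    fix x y z assume "x \<in> S" "y \<in> S" "z \<in> S" "lt x y" "lt y z"
    then show "lt x z" using t assms(2) by blast
  qed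
  ultimately show ?thesis unfolding is_poset_def by (intro conjI)
qed

lemma to_section:
  assumes "is_poset A lt" "two_antichain A lt \<or> six_stack A lt"
  shows "\<exists>B R. nice_section B R \<and> poset_iso B R A lt"
proof (cases "two_antichain A lt")
  case True then show ?thesis by (rule anti_to_section)
next
  case False
  then have "six_stack A lt" using assms(2) by simp
  then show ?thesis by (rule stack_to_section[OF assms(1)])
qed

theorem proposition4p2:
  fixes A :: "'a set" and lt :: "'a \<Rightarrow> 'a \<Rightarrow> bool"
  assumes "is_poset A lt" and "ranked A lt"
  shows "((\<exists>B R. nice_section B R \<and> poset_iso B R A lt) \<longleftrightarrow>
            (two_antichain A lt \<or> six_stack A lt))
       \<and> ((\<exists>Ss. Ss \<noteq> [] \<and> (\<forall>S\<in>set Ss. nice_section (fst S) (snd S)) \<and>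
              poset_iso (osum_carrier Ss) (osum_lt Ss) A lt) \<longleftrightarrow>
            six_tower A lt)"
proof (intro conjI iffI)
  assume "\<exists>B R. nice_section B R \<and> poset_iso B R A lt"
  then obtain B R where BR: "nice_section B R" "poset_iso B R A lt" by blast
  have "ranked B R" using ranked_iso[OF poset_iso_sym[OF BR(2)] assms(2)] .
  then have "two_antichain B R \<or> six_stack B R" using nice_section_cases[OF BR(1)] by blast
  then show "two_antichain A lt \<or> six_stack A lt"
    using two_antichain_iso[OF BR(2)] six_stack_iso[OF BR(2)] by blast
next
  assume "two_antichain A lt \<or> six_stack A lt"
  then show "\<exists>B R. nice_section B R \<and> poset_iso B R A lt" using to_section assms(1) by blast
next
  assume "\<exists>Ss. Ss \<noteq> [] \<and> (\<forall>S\<in>set Ss. nice_section (fst S) (snd S)) \<and>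
              poset_iso (osum_carrier Ss) (osum_lt Ss) A lt"
  then obtain Ss where Ss: "Ss \<noteq> []" "\<forall>S\<in>set Ss. nice_section (fst S) (snd S)"
    "poset_iso (osum_carrier Ss) (osum_lt Ss) A lt" by blast
  obtain f g where I: "iso_pair (osum_carrier Ss) (osum_lt Ss) A lt f g"
    using poset_iso_pair[OF Ss(3)] by blast
  have RO: "ranked (osum_carrier Ss) (osum_lt Ss)"
    using ranked_iso[OF poset_iso_sym[OF Ss(3)] assms(2)] .
  have F: "\<forall>S\<in>set Ss. finite (fst S) \<and> fst S \<noteq> {}" using Ss(2) nice_nonempty by blast
  define Ps where "Ps = map (\<lambda>j. (f ` Pair j ` fst (Ss!j), lt)) [0..<length Ss]"
  have lenP: "length Ps = length Ss" unfolding Ps_def by simp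
  have Pj: "Ps!j = (f ` Pair j ` fst (Ss!j), lt)" if "j < length Ss" for j
    unfolding Ps_def using that by simp
  have isoj: "poset_iso (fst (Ss!j)) (snd (Ss!j)) (fst (Ps!j)) (snd (Ps!j))" if j: "j < length Ss" for j
  proof -
    have sub: "Pair j ` fst (Ss!j) \<subseteq> osum_carrier Ss" using j unfolding osum_carrier_def by auto
    have I2: "iso_pair (Pair j ` fst (Ss!j)) (osum_lt Ss) (f ` Pair j ` fst (Ss!j)) lt f g"
      using poset_iso_sub[OF I sub] .
    have a1: "\<forall>p\<in>Pair j ` fst (Ss!j). f p \<in> f ` Pair j ` fst (Ss!j) \<and> g (f p) = p"
     and a2: "\<forall>y\<in>f ` Pair j ` fst (Ss!j). g y \<in> Pair j ` fst (Ss!j) \<and> f (g y) = y"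
     and a3: "\<forall>p\<in>Pair j ` fst (Ss!j). \<forall>q\<in>Pair j ` fst (Ss!j). osum_lt Ss p q \<longleftrightarrow> lt (f p) (f q)"
      using I2 unfolding iso_pair_def by blast+
    have "iso_pair (fst (Ss!j)) (snd (Ss!j)) (f ` Pair j ` fst (Ss!j)) lt (\<lambda>x. f (j,x)) (\<lambda>y. snd (g y))"
      unfolding iso_pair_def
    proof (intro conjI ballI)
      fix x assume x: "x \<in> fst (Ss!j)"
      then have px: "(j,x) \<in> Pair j ` fst (Ss!j)" by blast
      show "f (j,x) \<in> f ` Pair j ` fst (Ss!j)" using px by blast
      have "g (f (j,x)) = (j,x)" using a1 px by blast
      then show "snd (g (f (j,x))) = x" by simp
    next
      fix y assume y: "y \<in> f ` Pair j ` fst (Ss!j)"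
      then obtain x where x: "x \<in> fst (Ss!j)" "y = f (j,x)" by blast
      then have px: "(j,x) \<in> Pair j ` fst (Ss!j)" by blast
      have "g (f (j,x)) = (j,x)" using a1 px by blast
      then show "snd (g y) \<in> fst (Ss!j)" "f (j, snd (g y)) = y" using x by simp_all
    next
      fix x y assume x: "x \<in> fst (Ss!j)" and y: "y \<in> fst (Ss!j)"
      then have "(j,x) \<in> Pair j ` fst (Ss!j)" "(j,y) \<in> Pair j ` fst (Ss!j)" by blast+
      then have "osum_lt Ss (j,x) (j,y) \<longleftrightarrow> lt (f (j,x)) (f (j,y))" using a3 by blast
      then show "snd (Ss!j) x y \<longleftrightarrow> lt (f (j,x)) (f (j,y))" unfolding osum_lt_def by simp
    qed
    then show ?thesis using Pj[OF j] iso_pair_poset by simp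
  qed
  have "six_tower A lt"
    unfolding six_tower_def
  proof (intro exI[of _ Ps] conjI ballI)
    show "Ps \<noteq> []" using Ss(1) lenP by auto
  next
    fix P assume "P \<in> set Ps"
    then obtain j where j: "j < length Ss" "P = Ps!j" using lenP by (metis in_set_conv_nth)
    have sub: "f ` Pair j ` fst (Ss!j) \<subseteq> A"
      using I j unfolding iso_pair_def osum_carrier_def by auto
    show "is_poset (fst P) (snd P)" using poset_sub[OF assms(1) sub] Pj[OF j(1)] j(2) by simp
    have "nice_section (fst (Ss!j)) (snd (Ss!j))" using Ss(2) j(1) by simp
    moreover have "ranked (fst (Ss!j)) (snd (Ss!j))" using osum_ranked[OF RO F j(1)] .
    ultimately have "two_antichain (fst (Ss!j)) (snd (Ss!j)) \<or> six_stack (fst (Ss!j)) (snd (Ss!j))"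
      using nice_section_cases by blast
    then show "two_antichain (fst P) (snd P) \<or> six_stack (fst P) (snd P)"
      using two_antichain_iso[OF isoj[OF j(1)]] six_stack_iso[OF isoj[OF j(1)]] j(2) by blast
  next
    have "poset_iso (osum_carrier Ss) (osum_lt Ss) (osum_carrier Ps) (osum_lt Ps)"
      using osum_iso[of Ss Ps] lenP isoj by simp
    then show "poset_iso A lt (osum_carrier Ps) (osum_lt Ps)"
      using poset_iso_trans[OF poset_iso_sym[OF Ss(3)]] by blast
  qed
  then show "six_tower A lt" .
next
  assume "six_tower A lt"
  then obtain Ps :: "('a set \<times> ('a \<Rightarrow> 'a \<Rightarrow> bool)) list" where Ps: "Ps \<noteq> []"
    "\<forall>P\<in>set Ps. is_poset (fst P) (snd P) \<and> (two_antichain (fst P) (snd P) \<or> six_stack (fst P) (snd P))"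
    "poset_iso A lt (osum_carrier Ps) (osum_lt Ps)"
    unfolding six_tower_def by blast
  have ex: "\<exists>S. nice_section (fst S) (snd S) \<and> poset_iso (fst S) (snd S) (fst P) (snd P)"
    if "P \<in> set Ps" for P
    using to_section[of "fst P" "snd P"] Ps(2) that by auto
  define Ss where "Ss = map (\<lambda>P. SOME S. nice_section (fst S) (snd S) \<and> poset_iso (fst S) (snd S) (fst P) (snd P)) Ps"
  have Sj: "nice_section (fst (Ss!j)) (snd (Ss!j)) \<and> poset_iso (fst (Ss!j)) (snd (Ss!j)) (fst (Ps!j)) (snd (Ps!j))"
    if "j < length Ps" for j
    unfolding Ss_def using that someI_ex[OF ex[OF nth_mem[OF that]]] by simp
  have len: "length Ss = length Ps" unfolding Ss_def by simp
  show "\<exists>Ss. Ss \<noteq> [] \<and> (\<forall>S\<in>set Ss. nice_section (fst S) (snd S)) \<and>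
              poset_iso (osum_carrier Ss) (osum_lt Ss) A lt"
  proof (intro exI[of _ Ss] conjI ballI)
    show "Ss \<noteq> []" using Ps(1) len by auto
    fix S assume "S \<in> set Ss"
    then obtain j where "j < length Ps" "S = Ss!j" using len by (metis in_set_conv_nth)
    then show "nice_section (fst S) (snd S)" using Sj by simp
  next
    have "poset_iso (osum_carrier Ss) (osum_lt Ss) (osum_carrier Ps) (osum_lt Ps)"
      using osum_iso[of Ss Ps] len Sj by simp
    then show "poset_iso (osum_carrier Ss) (osum_lt Ss) A lt"
      using poset_iso_trans[OF _ poset_iso_sym[OF Ps(3)]] by blast
  qed
qed


end
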